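(* Let $A,\Delta A\in\mathbb{R}^{n\times m}$, $\widetilde A=A+\Delta A$ and $1\le r<\min\{n,m\}$. Then \[\max\{\|\sin\Theta(U_1,\widetilde U_1)\|,\|\sin\Theta(V_1,\widetilde V_1)\|\}\le\min\Big\{\frac{2\|\Delta A\|}{\sigma_r-\sigma_{r+1}},1\Big\},\] where the minimum is interpreted as $1$ when $\sigma_r=\sigma_{r+1}$. Moreover, if $4\|\Delta A\|\le\sigma_r-\sigma_{r+1}$, then \[\|\sin\Theta(U_1,\widetilde U_1)\|\le\frac{8}{3}\cdot\frac{\sigma_r\|\alpha_{21}\|+\sigma_{r+1}\|\alpha_{12}\|+\|\alpha_{22}\|\|\alpha_{12}\|}{\sigma_r^2-\sigma_{r+1}^2},\qquad \|\sin\Theta(V_1,\widetilde V_1)\|\le\frac{8}{3}\cdot\frac{\sigma_r\|\alpha_{12}\|+\sigma_{r+1}\|\alpha_{21}\|+\|\alpha_{22}\|\|\alpha_{21}\|}{\sigma_r^2-\sigma_{r+1}^2},\] where $\alpha_{12}=U_1^T(\Delta A)V_2$, $\alpha_{21}=U_2^T(\Delta A)V_1$, $\alpha_{22}=U_2^T(\Delta A)V_2$.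
   Context: $A=U\Sigma V^T$ and $\widetilde A=\widetilde U\widetilde\Sigma\widetilde V^T$ are full SVDs with singular values $\sigma_1\ge\sigma_2\ge\dots$ of $A$ in nonincreasing order. $U=(U_1\ U_2)$ with $U_1\in\mathbb{R}^{n\times r}$, $V=(V_1\ V_2)$ with $V_1\in\mathbb{R}^{m\times r}$, and likewise $\widetilde U_1\in\mathbb{R}^{n\times r},\widetilde V_1\in\mathbb{R}^{m\times r}$ hold the leading $r$ singular vectors of $\widetilde A$. $\|\cdot\|$ is the spectral norm. For $X,\widetilde X\in\mathbb{R}^{d\times r}$ with orthonormal columns, if $\zeta_1\ge\dots\ge\zeta_r$ are the singular values of $X^T\widetilde X$, then $\sin\Theta(X,\widetilde X)=\mathrm{diag}(\sqrt{1-\zeta_1^2},\dots,\sqrt{1-\zeta_r^2})$. *)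

theory Defs
  imports "Jordan_Normal_Form.Matrix"
begin

definition is_svd :: "real mat \<Rightarrow> real mat \<Rightarrow> real mat \<Rightarrow> real mat \<Rightarrow> bool" where
  "is_svd A U S V \<longleftrightarrow>
     (let n = dim_row A; m = dim_col A in
       U \<in> carrier_mat n n \<and> V \<in> carrier_mat m m \<and> S \<in> carrier_mat n m \<and>
       transpose_mat U * U = 1\<^sub>m n \<and> transpose_mat V * V = 1\<^sub>m m \<and>
       (\<forall>i<n. \<forall>j<m. i \<noteq> j \<longrightarrow> S $$ (i, j) = 0) \<and>
       (\<forall>i<min n m. 0 \<le> S $$ (i, i)) \<and>
       (\<forall>i j. i \<le> j \<longrightarrow> j < min n m \<longrightarrow> S $$ (j, j) \<le> S $$ (i, i)) \<and>
       A = U * S * transpose_mat V)"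

text \<open>Singular values (0-indexed, nonincreasing) of a matrix: the diagonal of the
  middle factor of a full SVD (they are uniquely determined).\<close>
definition singular_values :: "real mat \<Rightarrow> nat \<Rightarrow> real" where
  "singular_values M = (SOME z. \<exists>U S V. is_svd M U S V \<and>
       (\<forall>i. z i = (if i < min (dim_row M) (dim_col M) then S $$ (i, i) else 0)))"

definition vnorm :: "real vec \<Rightarrow> real" where
  "vnorm x = sqrt (x \<bullet> x)"

definition spec_norm :: "real mat \<Rightarrow> real" where
  "spec_norm M = Sup {vnorm (M *\<^sub>v x) | x. x \<in> carrier_vec (dim_col M) \<and> vnorm x = 1}"

definition sin_theta :: "real mat \<Rightarrow> real mat \<Rightarrow> real mat" where
  "sin_theta X Xt =
     (let r = dim_col X; z = singular_values (transpose_mat X * Xt) in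
       mat r r (\<lambda>(i, j). if i = j then sqrt (1 - (z i)\<^sup>2) else 0))"

definition cols_upto :: "nat \<Rightarrow> 'a mat \<Rightarrow> 'a mat" where
  "cols_upto k M = mat (dim_row M) k (\<lambda>(i, j). M $$ (i, j))"

definition cols_from :: "nat \<Rightarrow> 'a mat \<Rightarrow> 'a mat" where
  "cols_from k M = mat (dim_row M) (dim_col M - k) (\<lambda>(i, j). M $$ (i, j + k))"

end

theory Submission
  imports Defs "Jordan_Normal_Form.Spectral_Radius"
begin
lemma sp_self_sum: "(x::real vec) \<bullet> x = (\<Sum>i<dim_vec x. (x$i)^2)"
  unfolding scalar_prod_def by (simp add: power2_eq_square atLeast0LessThan)

lemma sp_self_nonneg: "0 \<le> (x::real vec) \<bullet> x"
  by (simp add: sp_self_sum sum_nonneg)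

lemma vnorm_nonneg: "0 \<le> vnorm x"
  unfolding vnorm_def by (simp add: sp_self_nonneg)

lemma vnorm_sq: "(vnorm x)^2 = x \<bullet> x"
  unfolding vnorm_def using sp_self_nonneg by simp

lemma vnorm_sq_sum: "(vnorm x)^2 = (\<Sum>i<dim_vec x. (x$i)^2)"
  using vnorm_sq sp_self_sum by simp

lemma sp_self_zero: assumes "x \<in> carrier_vec n" "(x::real vec) \<bullet> x = 0" shows "x = 0\<^sub>v n"
proof -
  have "\<forall>i\<in>{..<dim_vec x}. (x$i)^2 = 0"
    using assms(2) unfolding sp_self_sum by (subst sum_nonneg_eq_0_iff[symmetric], auto)
  then show ?thesis using assms(1) by (intro eq_vecI, auto)
qed

lemma vnorm_zero: assumes "x \<in> carrier_vec n" "vnorm x = 0" shows "x = 0\<^sub>v n"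
  using sp_self_zero[OF assms(1)] assms(2) vnorm_sq[of x] by simp

lemma vnorm_0[simp]: "vnorm (0\<^sub>v n) = 0"
  unfolding vnorm_def by simp

lemma cauchy_schwarz_sq:
  fixes x y :: "real vec"
  assumes x: "x \<in> carrier_vec n" and y: "y \<in> carrier_vec n"
  shows "(x \<bullet> y)^2 \<le> (x \<bullet> x) * (y \<bullet> y)"
proof -
  define a where "a = x \<bullet> x"
  define b where "b = y \<bullet> y"
  define c where "c = x \<bullet> y"
  have xs: "a = (\<Sum>i<n. x$i * x$i)" "b = (\<Sum>i<n. y$i * y$i)" "c = (\<Sum>i<n. x$i * y$i)"
    using x y unfolding a_def b_def c_def scalar_prod_def by (auto simp: atLeast0LessThan)
  have "0 \<le> (\<Sum>i<n. (b * x$i - c * y$i)^2)" by (intro sum_nonneg, auto)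
  also have "\<dots> = (\<Sum>i<n. b*b*(x$i*x$i) - 2*b*c*(x$i*y$i) + c*c*(y$i*y$i))"
    by (intro sum.cong, auto simp: power2_eq_square algebra_simps)
  also have "\<dots> = b*b*(\<Sum>i<n. x$i*x$i) - 2*b*c*(\<Sum>i<n. x$i*y$i) + c*c*(\<Sum>i<n. y$i*y$i)"
    by (simp add: sum.distrib sum_subtractf sum_distrib_left)
  also have "\<dots> = b*b*a - 2*b*c*c + c*c*b" unfolding xs by simp
  finally have 1: "0 \<le> b * (a*b - c*c)" by (simp add: algebra_simps)
  show ?thesis
  proof (cases "b = 0")
    case True
    then have "y = 0\<^sub>v n" using sp_self_zero[OF y] b_def by simp
    then show ?thesis using x y by (simp add: sp_self_nonneg)
  next
    case False
    then have "b > 0" using sp_self_nonneg[of y] b_def by simp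
    with 1 have "c*c \<le> a*b" by (simp add: zero_le_mult_iff)
    then show ?thesis unfolding a_def b_def c_def by (simp add: power2_eq_square)
  qed
qed

lemma cauchy_schwarz:
  fixes x y :: "real vec"
  assumes x: "x \<in> carrier_vec n" and y: "y \<in> carrier_vec n"
  shows "\<bar>x \<bullet> y\<bar> \<le> vnorm x * vnorm y"
proof -
  have "\<bar>x \<bullet> y\<bar> = sqrt ((x \<bullet> y)^2)" by simp
  also have "\<dots> \<le> sqrt ((x \<bullet> x) * (y \<bullet> y))"
    using cauchy_schwarz_sq[OF x y] by (rule real_sqrt_le_mono)
  also have "\<dots> = vnorm x * vnorm y" unfolding vnorm_def by (simp add: real_sqrt_mult)
  finally show ?thesis .
qed

lemma vnorm_le_iff: "vnorm x \<le> vnorm y \<longleftrightarrow> x \<bullet> x \<le> y \<bullet> y"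
  unfolding vnorm_def using sp_self_nonneg by simp

lemma vnorm_le_sq: assumes "0 \<le> c" shows "vnorm x \<le> c \<longleftrightarrow> x \<bullet> x \<le> c^2"
  unfolding vnorm_def using sp_self_nonneg assms
  by (metis real_le_lsqrt real_sqrt_le_iff real_sqrt_pow2 real_sqrt_power sp_self_nonneg)

lemma vnorm_add:
  fixes x y :: "real vec"
  assumes x: "x \<in> carrier_vec n" and y: "y \<in> carrier_vec n"
  shows "vnorm (x + y) \<le> vnorm x + vnorm y"
proof -
  have "(x + y) \<bullet> (x + y) = x \<bullet> x + 2 * (x \<bullet> y) + y \<bullet> y"
    using x y by (simp add: add_scalar_prod_distrib[of _ n] scalar_prod_add_distrib[of _ n]
        comm_scalar_prod[of y n x])
  also have "\<dots> \<le> (vnorm x)^2 + 2 * (vnorm x * vnorm y) + (vnorm y)^2"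
    using cauchy_schwarz[OF x y] by (simp add: vnorm_sq)
  also have "\<dots> = (vnorm x + vnorm y)^2" by (simp add: power2_eq_square algebra_simps)
  finally show ?thesis using vnorm_le_sq[of "vnorm x + vnorm y" "x+y"] vnorm_nonneg
    by (simp add: add_nonneg_nonneg)
qed

lemma vnorm_smult: "vnorm (c \<cdot>\<^sub>v x) = \<bar>c\<bar> * vnorm x"
proof -
  have "(c \<cdot>\<^sub>v x) \<bullet> (c \<cdot>\<^sub>v x) = c^2 * (x \<bullet> x)"
    unfolding scalar_prod_def by (simp add: sum_distrib_left power2_eq_square algebra_simps)
  then show ?thesis unfolding vnorm_def by (simp add: real_sqrt_mult)
qed

lemma vnorm_uminus: "vnorm (- x) = vnorm x"
  unfolding vnorm_def scalar_prod_def by simp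

lemma vnorm_diff:
  fixes x y :: "real vec"
  assumes x: "x \<in> carrier_vec n" and y: "y \<in> carrier_vec n"
  shows "vnorm x - vnorm y \<le> vnorm (x + y)"
proof -
  have "x = (x + y) + (- y)" using x y by auto
  then have "vnorm x \<le> vnorm (x + y) + vnorm (- y)"
    using vnorm_add[of "x + y" n "- y"] x y by (metis add_carrier_vec uminus_carrier_vec)
  then show ?thesis by (simp add: vnorm_uminus)
qed

definition frob :: "real mat \<Rightarrow> real" where
  "frob M = (\<Sum>i<dim_row M. row M i \<bullet> row M i)"

lemma mat_vec_frob:
  fixes M :: "real mat"
  assumes M: "M \<in> carrier_mat n m" and x: "x \<in> carrier_vec m"
  shows "(M *\<^sub>v x) \<bullet> (M *\<^sub>v x) \<le> frob M * (x \<bullet> x)"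
proof -
  have "(M *\<^sub>v x) \<bullet> (M *\<^sub>v x) = (\<Sum>i<n. (row M i \<bullet> x)^2)"
    using M x unfolding sp_self_sum by simp
  also have "\<dots> \<le> (\<Sum>i<n. (row M i \<bullet> row M i) * (x \<bullet> x))"
    by (intro sum_mono cauchy_schwarz_sq[of _ m], insert M x, auto)
  also have "\<dots> = frob M * (x \<bullet> x)" unfolding frob_def using M by (simp add: sum_distrib_right)
  finally show ?thesis .
qed

lemma frob_nonneg: "0 \<le> frob M" unfolding frob_def by (intro sum_nonneg sp_self_nonneg)

lemma spec_norm_bdd:
  fixes M :: "real mat"
  assumes M: "M \<in> carrier_mat n m"
  shows "bdd_above {vnorm (M *\<^sub>v x) | x. x \<in> carrier_vec (dim_col M) \<and> vnorm x = 1}"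
proof (rule bdd_aboveI[of _ "sqrt (frob M)"], clarify)
  fix x :: "real vec" assume x: "x \<in> carrier_vec (dim_col M)" and 1: "vnorm x = 1"
  have "x \<bullet> x = 1" using 1 vnorm_sq[of x] by simp
  then have "(M *\<^sub>v x) \<bullet> (M *\<^sub>v x) \<le> frob M" using mat_vec_frob[OF M, of x] x M by simp
  then show "vnorm (M *\<^sub>v x) \<le> sqrt (frob M)" unfolding vnorm_def by simp
qed

lemma unit_vec_vnorm: "i < m \<Longrightarrow> vnorm (unit_vec m i :: real vec) = 1"
  unfolding vnorm_def by simp

lemma spec_norm_upper:
  fixes M :: "real mat"
  assumes M: "M \<in> carrier_mat n m" and x: "x \<in> carrier_vec m"
  shows "vnorm (M *\<^sub>v x) \<le> spec_norm M * vnorm x"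
proof (cases "vnorm x = 0")
  case True
  then have "x = 0\<^sub>v m" using vnorm_zero[OF x] by simp
  moreover have "M *\<^sub>v 0\<^sub>v m = 0\<^sub>v n" using M by (intro eq_vecI, auto)
  ultimately show ?thesis using M True by simp
next
  case False
  then have pos: "vnorm x > 0" using vnorm_nonneg[of x] by simp
  define y where "y = (1 / vnorm x) \<cdot>\<^sub>v x"
  have y: "y \<in> carrier_vec m" using x unfolding y_def by simp
  have vy: "vnorm y = 1" unfolding y_def vnorm_smult using pos by simp
  have "vnorm (M *\<^sub>v y) \<le> spec_norm M"
    unfolding spec_norm_def
    by (rule cSup_upper[OF _ spec_norm_bdd[OF M]], insert y vy M, auto)
  moreover have "M *\<^sub>v y = (1 / vnorm x) \<cdot>\<^sub>v (M *\<^sub>v x)"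
    unfolding y_def by (rule mult_mat_vec[OF M x])
  ultimately have "vnorm (M *\<^sub>v x) / vnorm x \<le> spec_norm M"
    using pos by (simp add: vnorm_smult)
  then show ?thesis using pos by (simp add: field_simps)
qed

lemma spec_norm_nonneg:
  fixes M :: "real mat"
  assumes M: "M \<in> carrier_mat n m" and m: "0 < m"
  shows "0 \<le> spec_norm M"
proof -
  have "vnorm (M *\<^sub>v unit_vec m 0) \<le> spec_norm M"
    unfolding spec_norm_def
    by (rule cSup_upper[OF _ spec_norm_bdd[OF M]], insert M m, auto intro!: exI[of _ "unit_vec m 0"] simp: unit_vec_vnorm)
  then show ?thesis using vnorm_nonneg[of "M *\<^sub>v unit_vec m 0"] by linarith
qed

lemma spec_norm_le:
  fixes M :: "real mat"
  assumes M: "M \<in> carrier_mat n m" and m: "0 < m"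
    and le: "\<And>x. x \<in> carrier_vec m \<Longrightarrow> vnorm (M *\<^sub>v x) \<le> c * vnorm x"
  shows "spec_norm M \<le> c"
  unfolding spec_norm_def
proof (rule cSup_least)
  show "{vnorm (M *\<^sub>v x) |x. x \<in> carrier_vec (dim_col M) \<and> vnorm x = 1} \<noteq> {}"
    using M m by (auto intro!: exI[of _ "unit_vec m 0"] simp: unit_vec_vnorm)
  fix y assume "y \<in> {vnorm (M *\<^sub>v x) |x. x \<in> carrier_vec (dim_col M) \<and> vnorm x = 1}"
  then obtain x where "x \<in> carrier_vec m" "vnorm x = 1" "y = vnorm (M *\<^sub>v x)" using M by auto
  then show "y \<le> c" using le[of x] by simp
qed

definition padt :: "nat \<Rightarrow> real vec \<Rightarrow> real vec" where
  "padt k v = vec k (\<lambda>i. if i < dim_vec v then v$i else 0)"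
definition padb :: "nat \<Rightarrow> nat \<Rightarrow> real vec \<Rightarrow> real vec" where
  "padb r k v = vec k (\<lambda>i. if i < r then 0 else v $ (i - r))"
definition headv :: "nat \<Rightarrow> real vec \<Rightarrow> real vec" where
  "headv r v = vec r (\<lambda>i. v$i)"
definition tailv :: "nat \<Rightarrow> real vec \<Rightarrow> real vec" where
  "tailv r v = vec (dim_vec v - r) (\<lambda>i. v$(i+r))"

lemma padt_carrier[simp]: "padt k v \<in> carrier_vec k" unfolding padt_def by simp
lemma padb_carrier[simp]: "padb r k v \<in> carrier_vec k" unfolding padb_def by simp
lemma headv_carrier[simp]: "headv r v \<in> carrier_vec r" unfolding headv_def by simp
lemma tailv_carrier[simp]: "v \<in> carrier_vec k \<Longrightarrow> tailv r v \<in> carrier_vec (k - r)" unfolding tailv_def by simp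
lemma padt_dim[simp]: "dim_vec (padt k v) = k" unfolding padt_def by simp
lemma padb_dim[simp]: "dim_vec (padb r k v) = k" unfolding padb_def by simp
lemma headv_dim[simp]: "dim_vec (headv r v) = r" unfolding headv_def by simp
lemma tailv_dim[simp]: "dim_vec (tailv r v) = dim_vec v - r" unfolding tailv_def by simp

lemma cols_upto_carrier[simp]: "cols_upto r U \<in> carrier_mat (dim_row U) r"
  unfolding cols_upto_def by simp
lemma cols_from_carrier[simp]: "cols_from r U \<in> carrier_mat (dim_row U) (dim_col U - r)"
  unfolding cols_from_def by simp
lemma cols_upto_dims[simp]: "dim_row (cols_upto r U) = dim_row U" "dim_col (cols_upto r U) = r"
  unfolding cols_upto_def by simp_all
lemma cols_from_dims[simp]: "dim_row (cols_from r U) = dim_row U" "dim_col (cols_from r U) = dim_col U - r"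
  unfolding cols_from_def by simp_all

lemma sum_split_at: "(r::nat) \<le> k \<Longrightarrow> (\<Sum>j<k. f j) = (\<Sum>j<r. f j) + (\<Sum>j<k - r. f (j + r))"
proof -
  assume rk: "r \<le> k"
  have "(\<Sum>j<k. f j) = (\<Sum>j\<in>{0..<r}. f j) + (\<Sum>j\<in>{r..<k}. f j)"
    using rk by (simp add: atLeast0LessThan[symmetric] sum.atLeastLessThan_concat)
  also have "(\<Sum>j\<in>{r..<k}. f j) = (\<Sum>j\<in>{0..<k-r}. f (j + r))"
    using sum.shift_bounds_nat_ivl[of f 0 r "k - r"] rk by simp
  finally show ?thesis by (simp add: atLeast0LessThan)
qed

lemma cols_upto_mult:
  assumes U: "U \<in> carrier_mat n k" and c: "c \<in> carrier_vec r" and rk: "r \<le> k"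
  shows "cols_upto r U *\<^sub>v c = U *\<^sub>v padt k c"
proof (rule eq_vecI)
  fix i assume "i < dim_vec (U *\<^sub>v padt k c)"
  then have i: "i < n" using U by simp
  have "(U *\<^sub>v padt k c) $ i = (\<Sum>j<k. U $$ (i,j) * (if j < r then c$j else 0))"
    using U c i by (simp add: scalar_prod_def padt_def atLeast0LessThan)
  also have "\<dots> = (\<Sum>j<r. U $$ (i,j) * c$j)"
    by (subst sum_split_at[OF rk], simp)
  also have "\<dots> = (cols_upto r U *\<^sub>v c) $ i"
    using U c i by (simp add: scalar_prod_def cols_upto_def atLeast0LessThan)
  finally show "(cols_upto r U *\<^sub>v c) $ i = (U *\<^sub>v padt k c) $ i" by simp
qed (insert U, auto)

lemma cols_from_mult:
  assumes U: "U \<in> carrier_mat n k" and d: "d \<in> carrier_vec (k - r)" and rk: "r \<le> k"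
  shows "cols_from r U *\<^sub>v d = U *\<^sub>v padb r k d"
proof (rule eq_vecI)
  fix i assume "i < dim_vec (U *\<^sub>v padb r k d)"
  then have i: "i < n" using U by simp
  have "(U *\<^sub>v padb r k d) $ i = (\<Sum>j<k. U $$ (i,j) * (if j < r then 0 else d$(j - r)))"
    using U d i by (simp add: scalar_prod_def padb_def atLeast0LessThan)
  also have "\<dots> = (\<Sum>j<k-r. U $$ (i,j+r) * d$j)"
    by (subst sum_split_at[OF rk], simp)
  also have "\<dots> = (cols_from r U *\<^sub>v d) $ i"
    using U d i by (simp add: scalar_prod_def cols_from_def atLeast0LessThan)
  finally show "(cols_from r U *\<^sub>v d) $ i = (U *\<^sub>v padb r k d) $ i" by simp
qed (insert U, auto)

lemma cols_upto_tmult: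
  assumes U: "U \<in> carrier_mat n k" and x: "x \<in> carrier_vec n" and rk: "r \<le> k"
  shows "transpose_mat (cols_upto r U) *\<^sub>v x = headv r (transpose_mat U *\<^sub>v x)"
  by (rule eq_vecI, insert U x rk, auto simp: headv_def cols_upto_def scalar_prod_def col_def)

lemma cols_from_tmult:
  assumes U: "U \<in> carrier_mat n k" and x: "x \<in> carrier_vec n" and rk: "r \<le> k"
  shows "transpose_mat (cols_from r U) *\<^sub>v x = tailv r (transpose_mat U *\<^sub>v x)"
  by (rule eq_vecI, insert U x rk, auto simp: tailv_def cols_from_def scalar_prod_def col_def)

lemma vnorm_split:
  assumes v: "v \<in> carrier_vec k" and rk: "r \<le> k"
  shows "(vnorm v)^2 = (vnorm (headv r v))^2 + (vnorm (tailv r v))^2"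
  unfolding vnorm_sq_sum using v rk
  by (simp add: headv_def tailv_def sum_split_at[OF rk])

lemma vnorm_headv_le: assumes v: "v \<in> carrier_vec k" and rk: "r \<le> k"
  shows "vnorm (headv r v) \<le> vnorm v"
  using vnorm_split[OF v rk] vnorm_nonneg
  by (metis le_add_same_cancel1 power2_le_imp_le zero_le_power2)

lemma vnorm_tailv_le: assumes v: "v \<in> carrier_vec k" and rk: "r \<le> k"
  shows "vnorm (tailv r v) \<le> vnorm v"
  using vnorm_split[OF v rk] vnorm_nonneg
  by (metis le_add_same_cancel2 power2_le_imp_le zero_le_power2)

lemma split_pad:
  assumes v: "v \<in> carrier_vec k" and rk: "r \<le> k"
  shows "v = padt k (headv r v) + padb r k (tailv r v)"
  by (rule eq_vecI, insert v rk, auto simp: padt_def padb_def headv_def tailv_def)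

lemma vnorm_padt: assumes "dim_vec c \<le> k" shows "vnorm (padt k c) = vnorm c"
proof -
  have "(vnorm (padt k c))^2 = (vnorm c)^2"
    unfolding vnorm_sq_sum using assms
    by (simp add: padt_def sum_split_at[OF assms] cong: if_cong)
  then show ?thesis using vnorm_nonneg by (metis power2_eq_iff_nonneg)
qed

lemma vnorm_padb: assumes "dim_vec d = k - r" "r \<le> k" shows "vnorm (padb r k d) = vnorm d"
proof -
  have "(vnorm (padb r k d))^2 = (vnorm d)^2"
    unfolding vnorm_sq_sum using assms
    by (simp add: padb_def sum_split_at[OF assms(2)])
  then show ?thesis using vnorm_nonneg by (metis power2_eq_iff_nonneg)
qed

lemma orth_right:
  fixes Q :: "real mat"
  assumes Q: "Q \<in> carrier_mat k k" and o: "transpose_mat Q * Q = 1\<^sub>m k"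
  shows "Q * transpose_mat Q = 1\<^sub>m k"
  by (rule mat_mult_left_right_inverse[OF _ Q o], insert Q, simp)

lemma orth_vnorm:
  fixes Q :: "real mat"
  assumes Q: "Q \<in> carrier_mat n k" and o: "transpose_mat Q * Q = 1\<^sub>m k" and x: "x \<in> carrier_vec k"
  shows "vnorm (Q *\<^sub>v x) = vnorm x"
proof -
  have "(transpose_mat Q *\<^sub>v (Q *\<^sub>v x)) \<bullet> x = (Q *\<^sub>v x) \<bullet> (Q *\<^sub>v x)"
    by (rule transpose_vec_mult_scalar[OF Q x], insert Q x, simp)
  moreover have "transpose_mat Q *\<^sub>v (Q *\<^sub>v x) = x"
    using o Q x by (metis assoc_mult_mat_vec carrier_matD(1) carrier_matD(2) carrier_matI index_transpose_mat(2,3) one_mult_mat_vec)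
  ultimately show ?thesis unfolding vnorm_def by simp
qed

lemma orth_vnorm_T:
  fixes Q :: "real mat"
  assumes Q: "Q \<in> carrier_mat k k" and o: "transpose_mat Q * Q = 1\<^sub>m k" and x: "x \<in> carrier_vec k"
  shows "vnorm (transpose_mat Q *\<^sub>v x) = vnorm x"
  by (rule orth_vnorm[OF _ _ x], insert Q orth_right[OF Q o], auto)

lemma diag_mult:
  fixes S :: "real mat"
  assumes S: "S \<in> carrier_mat n m" and d: "\<forall>i<n. \<forall>j<m. i \<noteq> j \<longrightarrow> S $$ (i, j) = 0"
    and v: "v \<in> carrier_vec m" and i: "i < n"
  shows "(S *\<^sub>v v) $ i = (if i < m then S $$ (i,i) * v $ i else 0)"
proof -
  have "(S *\<^sub>v v) $ i = (\<Sum>j\<in>{0..<m}. S $$ (i,j) * v $ j)"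
    using S v i by (simp add: scalar_prod_def)
  also have "\<dots> = (\<Sum>j\<in>{0..<m}. if j = i then S $$ (i,i) * v $ i else 0)"
    by (rule sum.cong, insert d i, auto)
  also have "\<dots> = (if i < m then S $$ (i,i) * v $ i else 0)" by simp
  finally show ?thesis .
qed

lemma spec_norm_transpose_le:
  fixes M :: "real mat"
  assumes M: "M \<in> carrier_mat n m" and n: "0 < n" and m: "0 < m"
  shows "spec_norm (transpose_mat M) \<le> spec_norm M"
proof (rule spec_norm_le[of _ m n], insert M n, simp, simp)
  fix x :: "real vec" assume x: "x \<in> carrier_vec n"
  define y where "y = transpose_mat M *\<^sub>v x"
  have y: "y \<in> carrier_vec m" using M x unfolding y_def by simp
  have "(vnorm y)^2 = y \<bullet> y" by (rule vnorm_sq)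
  also have "y \<bullet> y = x \<bullet> (M *\<^sub>v y)"
    unfolding y_def by (rule transpose_vec_mult_scalar[OF M _ x], insert M x, simp)
  also have "\<dots> \<le> vnorm x * vnorm (M *\<^sub>v y)"
    using cauchy_schwarz[OF x, of "M *\<^sub>v y"] M y by simp
  also have "\<dots> \<le> vnorm x * (spec_norm M * vnorm y)"
    by (rule mult_left_mono[OF spec_norm_upper[OF M y] vnorm_nonneg])
  finally have *: "(vnorm y)^2 \<le> spec_norm M * vnorm x * vnorm y" by (simp add: algebra_simps)
  show "vnorm (transpose_mat M *\<^sub>v x) \<le> spec_norm M * vnorm x"
  proof (cases "vnorm y = 0")
    case True then show ?thesis unfolding y_def[symmetric]
      using spec_norm_nonneg[OF M m] vnorm_nonneg[of x] by simp
  next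
    case False
    then have "vnorm y > 0" using vnorm_nonneg[of y] by simp
    with * show ?thesis unfolding y_def[symmetric] by (simp add: power2_eq_square)
  qed
qed

lemma spec_norm_transpose:
  fixes M :: "real mat"
  assumes M: "M \<in> carrier_mat n m" and n: "0 < n" and m: "0 < m"
  shows "spec_norm (transpose_mat M) = spec_norm M"
  using spec_norm_transpose_le[OF M n m] spec_norm_transpose_le[of "transpose_mat M" m n] M n m
  by fastforce

lemma is_svdD:
  assumes "is_svd A U S V" "A \<in> carrier_mat n m"
  shows "U \<in> carrier_mat n n" "V \<in> carrier_mat m m" "S \<in> carrier_mat n m"
    "transpose_mat U * U = 1\<^sub>m n" "transpose_mat V * V = 1\<^sub>m m"
    "\<forall>i<n. \<forall>j<m. i \<noteq> j \<longrightarrow> S $$ (i, j) = 0"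
    "\<forall>i<min n m. 0 \<le> S $$ (i, i)"
    "\<forall>i j. i \<le> j \<longrightarrow> j < min n m \<longrightarrow> S $$ (j, j) \<le> S $$ (i, i)"
    "A = U * S * transpose_mat V"
  using assms unfolding is_svd_def Let_def by auto

lemma is_svd_transpose:
  assumes "is_svd A U S V" "A \<in> carrier_mat n m"
  shows "is_svd (transpose_mat A) V (transpose_mat S) U"
proof -
  note d = is_svdD[OF assms]
  have US: "U * S \<in> carrier_mat n m" using d by simp
  have "transpose_mat A = transpose_mat (transpose_mat V) * (transpose_mat (U * S))"
    unfolding d(9) by (rule transpose_mult[OF US], insert d, simp)
  also have "transpose_mat (U * S) = transpose_mat S * transpose_mat U"
    by (rule transpose_mult, insert d, auto)
  finally have eq: "transpose_mat A = V * transpose_mat S * transpose_mat U"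
    using d by (simp add: assoc_mult_mat[of _ m m _ n _ n])
  show ?thesis unfolding is_svd_def Let_def using d eq assms(2)
    by (auto simp: min.commute)
qed

lemma mat_vec_unit:
  fixes A :: "real mat"
  assumes A: "A \<in> carrier_mat n k" and j: "j < k"
  shows "A *\<^sub>v unit_vec k j = col A j"
  by (rule eq_vecI, insert A j, auto)

lemma mat_eq_by_action:
  fixes A B :: "real mat"
  assumes A: "A \<in> carrier_mat n k" and B: "B \<in> carrier_mat n k"
    and eq: "\<And>x. x \<in> carrier_vec k \<Longrightarrow> A *\<^sub>v x = B *\<^sub>v x"
  shows "A = B"
proof (rule eq_matI)
  fix i j assume i: "i < dim_row B" and j: "j < dim_col B"
  have "A *\<^sub>v unit_vec k j = B *\<^sub>v unit_vec k j" by (rule eq, simp)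
  then have "col A j = col B j" using mat_vec_unit[OF A] mat_vec_unit[OF B] j B by simp
  then have "col A j $ i = col B j $ i" by simp
  then show "A $$ (i, j) = B $$ (i, j)" using i j A B by simp
qed (insert A B, auto)

definition hh_w :: "nat \<Rightarrow> real vec \<Rightarrow> real vec" where
  "hh_w k v = unit_vec k 0 - v"
definition hh_c :: "nat \<Rightarrow> real vec \<Rightarrow> real" where
  "hh_c k v = (let ww = hh_w k v \<bullet> hh_w k v in if ww = 0 then 0 else 2 / ww)"
definition hh :: "nat \<Rightarrow> real vec \<Rightarrow> real mat" where
  "hh k v = mat k k (\<lambda>(i,j). (if i = j then 1 else 0) - hh_c k v * (hh_w k v $ i * hh_w k v $ j))"

lemma hh_carrier[simp]: "hh k v \<in> carrier_mat k k" unfolding hh_def by simp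

lemma hh_w_carrier[simp]: "v \<in> carrier_vec k \<Longrightarrow> hh_w k v \<in> carrier_vec k"
  unfolding hh_w_def by simp

lemma hh_action:
  assumes v: "v \<in> carrier_vec k" and x: "x \<in> carrier_vec k"
  shows "hh k v *\<^sub>v x = x - (hh_c k v * (hh_w k v \<bullet> x)) \<cdot>\<^sub>v hh_w k v"
proof (rule eq_vecI)
  let ?w = "hh_w k v" and ?c = "hh_c k v"
  have w: "?w \<in> carrier_vec k" using v by simp
  fix i assume "i < dim_vec (x - (?c * (?w \<bullet> x)) \<cdot>\<^sub>v ?w)"
  then have i: "i < k" using w by simp
  have "(hh k v *\<^sub>v x) $ i = (\<Sum>j\<in>{0..<k}. ((if i = j then 1 else 0) - ?c * (?w $ i * ?w $ j)) * x $ j)"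
    using i x unfolding hh_def by (simp add: scalar_prod_def)
  also have "\<dots> = (\<Sum>j\<in>{0..<k}. (if i = j then x $ j else 0) - ?c * ?w $ i * (?w $ j * x $ j))"
    by (rule sum.cong, auto simp: algebra_simps)
  also have "\<dots> = (\<Sum>j\<in>{0..<k}. (if i = j then x $ j else 0)) - ?c * ?w $ i * (\<Sum>j\<in>{0..<k}. ?w $ j * x $ j)"
    by (simp only: sum_subtractf sum_distrib_left)
  also have "\<dots> = x $ i - ?c * ?w $ i * (?w \<bullet> x)"
    using i x w by (simp add: scalar_prod_def)
  finally show "(hh k v *\<^sub>v x) $ i = (x - (?c * (?w \<bullet> x)) \<cdot>\<^sub>v ?w) $ i"
    using i x w by simp
qed (insert x v, auto simp: hh_def hh_w_def)

lemma hh_transpose: "transpose_mat (hh k v) = hh k v"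
  unfolding hh_def by (rule eq_matI, auto)

lemma hh_invol:
  assumes v: "v \<in> carrier_vec k" and x: "x \<in> carrier_vec k"
  shows "hh k v *\<^sub>v (hh k v *\<^sub>v x) = x"
proof -
  let ?w = "hh_w k v" and ?c = "hh_c k v"
  have w: "?w \<in> carrier_vec k" using v by simp
  define a where "a = ?w \<bullet> x"
  define ww where "ww = ?w \<bullet> ?w"
  have cc: "?c * (2 - ?c * ww) = 0" unfolding hh_c_def ww_def Let_def by auto
  have y: "hh k v *\<^sub>v x = x - (?c * a) \<cdot>\<^sub>v ?w" unfolding a_def by (rule hh_action[OF v x])
  have y1: "x - (?c * a) \<cdot>\<^sub>v ?w \<in> carrier_vec k" using x w by simp
  have "?w \<bullet> (x - (?c * a) \<cdot>\<^sub>v ?w) = ?w \<bullet> x - ?w \<bullet> ((?c * a) \<cdot>\<^sub>v ?w)"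
    by (rule scalar_prod_minus_distrib[OF w x], insert w, simp)
  also have "\<dots> = a - ?c * a * ww" unfolding a_def ww_def using w by simp
  finally have wy: "?w \<bullet> (x - (?c * a) \<cdot>\<^sub>v ?w) = a - ?c * a * ww" .
  have "hh k v *\<^sub>v (hh k v *\<^sub>v x) = (x - (?c * a) \<cdot>\<^sub>v ?w) - (?c * (a - ?c * a * ww)) \<cdot>\<^sub>v ?w"
    unfolding y hh_action[OF v y1] wy by simp
  also have "\<dots> = x"
  proof (rule eq_vecI)
    fix i assume "i < dim_vec x"
    then have i: "i < k" using x by simp
    have "x $ i - ?c * a * ?w $ i - ?c * (a - ?c * a * ww) * ?w $ i = x $ i - a * ?w $ i * (?c * (2 - ?c * ww))"
      by (simp add: algebra_simps)
    also have "\<dots> = x $ i" using cc by simp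
    finally show "((x - (?c * a) \<cdot>\<^sub>v ?w) - (?c * (a - ?c * a * ww)) \<cdot>\<^sub>v ?w) $ i = x $ i"
      using i x w by simp
  qed (insert x w, simp)
  finally show ?thesis .
qed

lemma hh_orth:
  assumes v: "v \<in> carrier_vec k"
  shows "transpose_mat (hh k v) * hh k v = 1\<^sub>m k"
  unfolding hh_transpose
proof (rule mat_eq_by_action[of _ k k])
  fix x :: "real vec" assume x: "x \<in> carrier_vec k"
  have "(hh k v * hh k v) *\<^sub>v x = hh k v *\<^sub>v (hh k v *\<^sub>v x)"
    by (rule assoc_mult_mat_vec[of _ k k _ k], insert x, auto)
  then show "(hh k v * hh k v) *\<^sub>v x = 1\<^sub>m k *\<^sub>v x" using hh_invol[OF v x] x by simp
qed (auto intro!: mult_carrier_mat[of _ k k _ k])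

lemma hh_e0:
  assumes v: "v \<in> carrier_vec k" and k: "0 < k" and nv: "vnorm v = 1"
  shows "hh k v *\<^sub>v unit_vec k 0 = v"
proof -
  let ?w = "hh_w k v" and ?c = "hh_c k v" and ?e = "unit_vec k 0 :: real vec"
  have w: "?w \<in> carrier_vec k" using v by simp
  have e: "?e \<in> carrier_vec k" by simp
  have vv: "v \<bullet> v = 1" using nv vnorm_sq[of v] by simp
  have ve: "v \<bullet> ?e = v $ 0" using k by simp
  have ev: "?e \<bullet> v = v $ 0" using k v by simp
  have ee: "?e \<bullet> ?e = 1" using k by simp
  have we: "?w \<bullet> ?e = 1 - v $ 0" unfolding hh_w_def
    using minus_scalar_prod_distrib[OF e v e] ve ee by simp
  have "?w \<bullet> ?w = ?e \<bullet> ?w - v \<bullet> ?w" unfolding hh_w_def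
    by (rule minus_scalar_prod_distrib[OF e v], insert v, simp)
  also have "?e \<bullet> ?w = ?e \<bullet> ?e - ?e \<bullet> v" unfolding hh_w_def
    by (rule scalar_prod_minus_distrib[OF e e v])
  also have "v \<bullet> ?w = v \<bullet> ?e - v \<bullet> v" unfolding hh_w_def
    by (rule scalar_prod_minus_distrib[OF v e v])
  finally have ww: "?w \<bullet> ?w = 2 * (1 - v $ 0)" unfolding ee ev ve vv by simp
  show ?thesis
  proof (cases "?w \<bullet> ?w = 0")
    case True
    then have w0: "?w = 0\<^sub>v k" using sp_self_zero[OF w] by simp
    have "v = ?e"
    proof (rule eq_vecI)
      fix i assume "i < dim_vec ?e"
      then have i: "i < k" by simp
      have "?w $ i = 0" using w0 i by simp
      then show "v $ i = ?e $ i" unfolding hh_w_def using i v by simp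
    qed (insert v, simp)
    moreover have "?c = 0" using True unfolding hh_c_def Let_def by simp
    moreover have "?e - 0 \<cdot>\<^sub>v ?w = ?e" using w by (intro eq_vecI, auto)
    ultimately show ?thesis using hh_action[OF v e] by simp
  next
    case False
    then have "?c * (?w \<bullet> ?e) = 1" unfolding hh_c_def Let_def we ww by simp
    then have "hh k v *\<^sub>v ?e = ?e - 1 \<cdot>\<^sub>v ?w" using hh_action[OF v e] by simp
    also have "\<dots> = v" unfolding hh_w_def using v by (intro eq_vecI, auto)
    finally show ?thesis .
  qed
qed

lemma householder_exists:
  assumes v: "v \<in> carrier_vec k" and k: "0 < k" and nv: "vnorm v = 1"
  shows "\<exists>H. H \<in> carrier_mat k k \<and> transpose_mat H * H = 1\<^sub>m k \<and> H *\<^sub>v unit_vec k 0 = v"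
  using hh_orth[OF v] hh_e0[OF v k nv] by (intro exI[of _ "hh k v"], auto)

lemma sym_scalar:
  fixes G :: "real mat"
  assumes G: "G \<in> carrier_mat k k" and sym: "transpose_mat G = G"
    and a: "a \<in> carrier_vec k" and b: "b \<in> carrier_vec k"
  shows "b \<bullet> (G *\<^sub>v a) = a \<bullet> (G *\<^sub>v b)"
proof -
  have "(transpose_mat G *\<^sub>v b) \<bullet> a = b \<bullet> (G *\<^sub>v a)"
    by (rule transpose_vec_mult_scalar[OF G a b])
  then have "b \<bullet> (G *\<^sub>v a) = (G *\<^sub>v b) \<bullet> a" using sym by simp
  also have "\<dots> = a \<bullet> (G *\<^sub>v b)" by (rule comm_scalar_prod[of _ k], insert G a b, auto)
  finally show ?thesis .
qed

lemma sym_real_eigenvalue: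
  fixes G :: "real mat"
  assumes G: "G \<in> carrier_mat k k" and sym: "transpose_mat G = G" and k: "0 < k"
  shows "\<exists>\<mu>. eigenvalue G \<mu>"
proof -
  define C where "C = map_mat complex_of_real G"
  have C: "C \<in> carrier_mat k k" unfolding C_def using G by simp
  from spectrum_non_empty[OF C k] obtain l where "eigenvalue C l" unfolding spectrum_def by auto
  then obtain vc where ev: "eigenvector C vc l" unfolding eigenvalue_def by auto
  then have vc: "vc \<in> carrier_vec k" and vc0: "vc \<noteq> 0\<^sub>v k" and Cv: "C *\<^sub>v vc = l \<cdot>\<^sub>v vc"
    unfolding eigenvector_def using C by auto
  define a where "a = map_vec Re vc"
  define b where "b = map_vec Im vc"
  have a: "a \<in> carrier_vec k" and b: "b \<in> carrier_vec k" unfolding a_def b_def using vc by auto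
  have comp: "(C *\<^sub>v vc) $ i = (\<Sum>j\<in>{0..<k}. complex_of_real (G $$ (i,j)) * vc $ j)" if i: "i < k" for i
    using C G vc i unfolding C_def by (simp add: scalar_prod_def)
  have Ga: "G *\<^sub>v a = Re l \<cdot>\<^sub>v a - Im l \<cdot>\<^sub>v b"
  proof (rule eq_vecI)
    fix i assume "i < dim_vec (Re l \<cdot>\<^sub>v a - Im l \<cdot>\<^sub>v b)"
    then have i: "i < k" using b by simp
    have "(G *\<^sub>v a) $ i = (\<Sum>j\<in>{0..<k}. G $$ (i,j) * Re (vc $ j))"
      using G a i unfolding a_def by (simp add: scalar_prod_def)
    also have "\<dots> = Re ((C *\<^sub>v vc) $ i)" unfolding comp[OF i] Re_sum by simp
    also have "\<dots> = Re l * a $ i - Im l * b $ i" unfolding Cv using vc i a_def b_def by simp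
    finally show "(G *\<^sub>v a) $ i = (Re l \<cdot>\<^sub>v a - Im l \<cdot>\<^sub>v b) $ i" using i a b by simp
  qed (insert G a b, auto)
  have Gb: "G *\<^sub>v b = Re l \<cdot>\<^sub>v b + Im l \<cdot>\<^sub>v a"
  proof (rule eq_vecI)
    fix i assume "i < dim_vec (Re l \<cdot>\<^sub>v b + Im l \<cdot>\<^sub>v a)"
    then have i: "i < k" using a b by simp
    have "(G *\<^sub>v b) $ i = (\<Sum>j\<in>{0..<k}. G $$ (i,j) * Im (vc $ j))"
      using G b i unfolding b_def by (simp add: scalar_prod_def)
    also have "\<dots> = Im ((C *\<^sub>v vc) $ i)" unfolding comp[OF i] Im_sum by simp
    also have "\<dots> = Re l * b $ i + Im l * a $ i" unfolding Cv using vc i a_def b_def by simp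
    finally show "(G *\<^sub>v b) $ i = (Re l \<cdot>\<^sub>v b + Im l \<cdot>\<^sub>v a) $ i" using i a b by simp
  qed (insert G a b, auto)
  have vc_zero: "vc = 0\<^sub>v k" if "a = 0\<^sub>v k" "b = 0\<^sub>v k"
  proof (rule eq_vecI)
    fix i assume "i < dim_vec (0\<^sub>v k :: complex vec)" then have i: "i < k" by simp
    have "a $ i = 0" "b $ i = 0" using that i by simp_all
    then have "Re (vc$i) = 0" "Im (vc$i) = 0" using i vc unfolding a_def b_def by simp_all
    then show "vc $ i = 0\<^sub>v k $ i" using i by (simp add: complex_eq_iff)
  qed (insert vc, simp)
  have "b \<bullet> (G *\<^sub>v a) = Re l * (b \<bullet> a) - Im l * (b \<bullet> b)"
    unfolding Ga using a b by (simp add: scalar_prod_minus_distrib[of _ k])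
  moreover have "a \<bullet> (G *\<^sub>v b) = Re l * (a \<bullet> b) + Im l * (a \<bullet> a)"
    unfolding Gb using a b by (simp add: scalar_prod_add_distrib[of _ k])
  moreover have "b \<bullet> a = a \<bullet> b" by (rule comm_scalar_prod[OF b a])
  ultimately have "Im l * (a \<bullet> a + b \<bullet> b) = 0" using sym_scalar[OF G sym a b]
    by (simp add: algebra_simps)
  moreover have "a \<bullet> a + b \<bullet> b \<noteq> 0"
  proof
    assume "a \<bullet> a + b \<bullet> b = 0"
    then have "a \<bullet> a = 0" "b \<bullet> b = 0" using sp_self_nonneg[of a] sp_self_nonneg[of b] by linarith+
    then have "a = 0\<^sub>v k" "b = 0\<^sub>v k" using sp_self_zero a b by auto
    then have "vc = 0\<^sub>v k" by (rule vc_zero)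
    then show False using vc0 by simp
  qed
  ultimately have Im0: "Im l = 0" by simp
  show ?thesis
  proof (cases "a = 0\<^sub>v k")
    case False
    have "Re l \<cdot>\<^sub>v a - 0 \<cdot>\<^sub>v b = Re l \<cdot>\<^sub>v a" using a b by (intro eq_vecI, auto)
    then have "eigenvector G a (Re l)" unfolding eigenvector_def using G a False Ga Im0 by simp
    then show ?thesis unfolding eigenvalue_def by blast
  next
    case True
    have "b \<noteq> 0\<^sub>v k"
    proof
      assume "b = 0\<^sub>v k"
      with True have "vc = 0\<^sub>v k" by (intro vc_zero)
      then show False using vc0 by simp
    qed
    have "Re l \<cdot>\<^sub>v b + 0 \<cdot>\<^sub>v a = Re l \<cdot>\<^sub>v b" using a b by (intro eq_vecI, auto)
    then have "eigenvector G b (Re l)" unfolding eigenvector_def using G b \<open>b \<noteq> 0\<^sub>v k\<close> Gb Im0 by simp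
    then show ?thesis unfolding eigenvalue_def by blast
  qed
qed

lemma sym_max_eigen:
  fixes G :: "real mat"
  assumes G: "G \<in> carrier_mat k k" and sym: "transpose_mat G = G" and k: "0 < k"
  shows "\<exists>l v. v \<in> carrier_vec k \<and> vnorm v = 1 \<and> G *\<^sub>v v = l \<cdot>\<^sub>v v \<and>
     (\<forall>mu w. w \<in> carrier_vec k \<longrightarrow> w \<noteq> 0\<^sub>v k \<longrightarrow> G *\<^sub>v w = mu \<cdot>\<^sub>v w \<longrightarrow> mu \<le> l)"
proof -
  have fin: "finite (spectrum G)" by (rule card_finite_spectrum(1)[OF G])
  have ne: "spectrum G \<noteq> {}" using sym_real_eigenvalue[OF G sym k] unfolding spectrum_def by auto
  define l where "l = Max (spectrum G)"
  have "l \<in> spectrum G" unfolding l_def using fin ne by simp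
  then obtain v0 where "eigenvector G v0 l" unfolding spectrum_def eigenvalue_def by auto
  then have v0: "v0 \<in> carrier_vec k" "v0 \<noteq> 0\<^sub>v k" "G *\<^sub>v v0 = l \<cdot>\<^sub>v v0"
    unfolding eigenvector_def using G by auto
  have pos: "vnorm v0 > 0" using vnorm_nonneg[of v0] vnorm_zero[OF v0(1)] v0(2) by force
  define v where "v = (1 / vnorm v0) \<cdot>\<^sub>v v0"
  have v: "v \<in> carrier_vec k" unfolding v_def using v0 by simp
  have nv: "vnorm v = 1" unfolding v_def vnorm_smult using pos by simp
  have Gv: "G *\<^sub>v v = l \<cdot>\<^sub>v v" unfolding v_def using mult_mat_vec[OF G v0(1)] v0(3)
    by (simp add: smult_smult_assoc mult.commute)
  have mx: "mu \<le> l" if w: "w \<in> carrier_vec k" "w \<noteq> 0\<^sub>v k" "G *\<^sub>v w = mu \<cdot>\<^sub>v w" for mu w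
  proof -
    have "eigenvector G w mu" unfolding eigenvector_def using G w by simp
    then have "mu \<in> spectrum G" unfolding spectrum_def eigenvalue_def by auto
    then show ?thesis unfolding l_def using fin by simp
  qed
  show ?thesis using v nv Gv mx by blast
qed

definition blk :: "real \<Rightarrow> real mat \<Rightarrow> real mat" where
  "blk a B = mat (Suc (dim_row B)) (Suc (dim_col B))
     (\<lambda>(i,j). if i = 0 then (if j = 0 then a else 0) else if j = 0 then 0 else B $$ (i-1, j-1))"

lemma blk_carrier[simp]: "B \<in> carrier_mat p q \<Longrightarrow> blk a B \<in> carrier_mat (Suc p) (Suc q)"
  unfolding blk_def by simp

lemma blk_dims[simp]: "dim_row (blk a B) = Suc (dim_row B)" "dim_col (blk a B) = Suc (dim_col B)"
  unfolding blk_def by simp_all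

lemma blk_index:
  "i < Suc (dim_row B) \<Longrightarrow> j < Suc (dim_col B) \<Longrightarrow> blk a B $$ (i,j) =
    (if i = 0 then (if j = 0 then a else 0) else if j = 0 then 0 else B $$ (i-1, j-1))"
  unfolding blk_def by simp

lemma blk_mult:
  assumes B: "B \<in> carrier_mat p q" and D: "D \<in> carrier_mat q s"
  shows "blk a B * blk c D = blk (a * c) (B * D)"
proof (rule eq_matI)
  fix i j assume i: "i < dim_row (blk (a * c) (B * D))" and j: "j < dim_col (blk (a * c) (B * D))"
  have i': "i < Suc p" and j': "j < Suc s" using i j B D by auto
  have "(blk a B * blk c D) $$ (i,j) = (\<Sum>l\<in>{0..<Suc q}. blk a B $$ (i,l) * blk c D $$ (l,j))"
    using i' j' B D by (simp add: scalar_prod_def del: sum.atLeast0_lessThan_Suc)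
  also have "\<dots> = blk a B $$ (i,0) * blk c D $$ (0,j) + (\<Sum>l\<in>{0..<q}. blk a B $$ (i,Suc l) * blk c D $$ (Suc l,j))"
    by (simp only: atLeast0LessThan sum.lessThan_Suc_shift)
  also have "\<dots> = blk (a * c) (B * D) $$ (i,j)"
  proof (cases "i = 0")
    case True
    then show ?thesis using j' B D by (cases j, auto simp: blk_index)
  next
    case False
    then obtain i1 where i1: "i = Suc i1" by (cases i, auto)
    show ?thesis
    proof (cases j)
      case 0 then show ?thesis using i' B D i1 by (auto simp: blk_index)
    next
      case (Suc j1)
      have "(B * D) $$ (i1, j1) = (\<Sum>l\<in>{0..<q}. B $$ (i1,l) * D $$ (l,j1))"
        using i' j' B D i1 Suc by (simp add: scalar_prod_def)
      then show ?thesis using i' j' B D i1 Suc by (auto simp: blk_index)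
    qed
  qed
  finally show "(blk a B * blk c D) $$ (i,j) = blk (a * c) (B * D) $$ (i,j)" .
qed (insert B D, auto simp: blk_def)

lemma blk_transpose: "transpose_mat (blk a B) = blk a (transpose_mat B)"
  unfolding blk_def by (rule eq_matI, auto)

lemma blk_one: "blk 1 (1\<^sub>m p) = 1\<^sub>m (Suc p)"
  unfolding blk_def by (rule eq_matI, auto)

lemma blk_vec:
  assumes B: "B \<in> carrier_mat p q" and x: "x \<in> carrier_vec q"
  shows "blk a B *\<^sub>v padb 1 (Suc q) x = padb 1 (Suc p) (B *\<^sub>v x)"
proof (rule eq_vecI)
  fix i assume "i < dim_vec (padb 1 (Suc p) (B *\<^sub>v x))"
  then have i: "i < Suc p" by simp
  have "(blk a B *\<^sub>v padb 1 (Suc q) x) $ i = (\<Sum>l\<in>{0..<Suc q}. blk a B $$ (i,l) * padb 1 (Suc q) x $ l)"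
    using i B by (simp add: scalar_prod_def del: sum.atLeast0_lessThan_Suc)
  also have "\<dots> = blk a B $$ (i,0) * padb 1 (Suc q) x $ 0 + (\<Sum>l\<in>{0..<q}. blk a B $$ (i,Suc l) * padb 1 (Suc q) x $ Suc l)"
    by (simp only: atLeast0LessThan sum.lessThan_Suc_shift)
  also have "\<dots> = padb 1 (Suc p) (B *\<^sub>v x) $ i"
  proof (cases i)
    case 0 then show ?thesis using B by (simp add: blk_index padb_def)
  next
    case (Suc i1)
    then show ?thesis using B x i by (simp add: blk_index padb_def scalar_prod_def)
  qed
  finally show "(blk a B *\<^sub>v padb 1 (Suc q) x) $ i = padb 1 (Suc p) (B *\<^sub>v x) $ i" .
qed (insert B, auto)

lemma blk_decomp:
  fixes M1 :: "real mat"
  assumes M1: "M1 \<in> carrier_mat (Suc k) (Suc k)"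
    and c0: "M1 *\<^sub>v unit_vec (Suc k) 0 = s \<cdot>\<^sub>v unit_vec (Suc k) 0"
    and r0: "transpose_mat M1 *\<^sub>v unit_vec (Suc k) 0 = s \<cdot>\<^sub>v unit_vec (Suc k) 0"
  shows "M1 = blk s (mat k k (\<lambda>(i,j). M1 $$ (Suc i, Suc j)))"
proof (rule eq_matI)
  have c: "col M1 0 = s \<cdot>\<^sub>v unit_vec (Suc k) 0" using c0 mat_vec_unit[OF M1] by simp
  have r: "col (transpose_mat M1) 0 = s \<cdot>\<^sub>v unit_vec (Suc k) 0"
    using r0 mat_vec_unit[of "transpose_mat M1" "Suc k" "Suc k"] M1 by simp
  fix i j assume i: "i < dim_row (blk s (mat k k (\<lambda>(i,j). M1 $$ (Suc i, Suc j))))"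
    and j: "j < dim_col (blk s (mat k k (\<lambda>(i,j). M1 $$ (Suc i, Suc j))))"
  then have i': "i < Suc k" and j': "j < Suc k" unfolding blk_def by auto
  have ci: "M1 $$ (i, 0) = (if i = 0 then s else 0)"
    using arg_cong[OF c, of "\<lambda>v. v $ i"] i' M1 by auto
  have rj: "M1 $$ (0, j) = (if j = 0 then s else 0)"
    using arg_cong[OF r, of "\<lambda>v. v $ j"] j' M1 by auto
  show "M1 $$ (i, j) = blk s (mat k k (\<lambda>(i,j). M1 $$ (Suc i, Suc j))) $$ (i, j)"
    using i' j' ci rj by (cases i; cases j; auto simp: blk_index)
qed (insert M1, auto simp: blk_def)

lemma orth_cancel:
  fixes Q X :: "real mat"
  assumes Q: "Q \<in> carrier_mat k k" and o: "transpose_mat Q * Q = 1\<^sub>m k" and X: "X \<in> carrier_mat k n"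
  shows "Q * (transpose_mat Q * X) = X" "transpose_mat Q * (Q * X) = X"
proof -
  have o2: "Q * transpose_mat Q = 1\<^sub>m k" by (rule orth_right[OF Q o])
  have "Q * (transpose_mat Q * X) = (Q * transpose_mat Q) * X"
    by (rule assoc_mult_mat[symmetric, of _ k k _ k _ n], insert Q X, auto)
  then show "Q * (transpose_mat Q * X) = X" using o2 X by simp
  have "transpose_mat Q * (Q * X) = (transpose_mat Q * Q) * X"
    by (rule assoc_mult_mat[symmetric, of _ k k _ k _ n], insert Q X, auto)
  then show "transpose_mat Q * (Q * X) = X" using o X by simp
qed

lemma orth_cancel_vec:
  fixes Q :: "real mat"
  assumes Q: "Q \<in> carrier_mat k k" and o: "transpose_mat Q * Q = 1\<^sub>m k" and x: "x \<in> carrier_vec k"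
  shows "Q *\<^sub>v (transpose_mat Q *\<^sub>v x) = x" "transpose_mat Q *\<^sub>v (Q *\<^sub>v x) = x"
proof -
  have o2: "Q * transpose_mat Q = 1\<^sub>m k" by (rule orth_right[OF Q o])
  have "Q *\<^sub>v (transpose_mat Q *\<^sub>v x) = (Q * transpose_mat Q) *\<^sub>v x"
    by (rule assoc_mult_mat_vec[symmetric, of _ k k _ k], insert Q x, auto)
  then show "Q *\<^sub>v (transpose_mat Q *\<^sub>v x) = x" using o2 x by simp
  have "transpose_mat Q *\<^sub>v (Q *\<^sub>v x) = (transpose_mat Q * Q) *\<^sub>v x"
    by (rule assoc_mult_mat_vec[symmetric, of _ k k _ k], insert Q x, auto)
  then show "transpose_mat Q *\<^sub>v (Q *\<^sub>v x) = x" using o x by simp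
qed

lemma transpose3:
  fixes A B C :: "real mat"
  assumes "A \<in> carrier_mat n1 n2" "B \<in> carrier_mat n2 n3" "C \<in> carrier_mat n3 n4"
  shows "transpose_mat (A * B * C) = transpose_mat C * transpose_mat B * transpose_mat A"
proof -
  have "transpose_mat (A * B * C) = transpose_mat C * transpose_mat (A * B)"
    by (rule transpose_mult, insert assms, auto)
  also have "transpose_mat (A * B) = transpose_mat B * transpose_mat A"
    by (rule transpose_mult, insert assms, auto)
  finally show ?thesis using assms by (simp add: assoc_mult_mat[of _ n4 n3 _ n2 _ n1])
qed

lemma svd_step_u:
  fixes M :: "real mat"
  assumes M: "M \<in> carrier_mat k k" and v: "v \<in> carrier_vec k" and nv: "vnorm v = 1"
    and Gv: "(transpose_mat M * M) *\<^sub>v v = l \<cdot>\<^sub>v v"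
  shows "0 \<le> l" "\<exists>u. u \<in> carrier_vec k \<and> vnorm u = 1 \<and> M *\<^sub>v v = sqrt l \<cdot>\<^sub>v u
     \<and> transpose_mat M *\<^sub>v u = sqrt l \<cdot>\<^sub>v v"
proof -
  have vv: "v \<bullet> v = 1" using nv vnorm_sq[of v] by simp
  have Mv: "M *\<^sub>v v \<in> carrier_vec k" using M v by simp
  have "(transpose_mat (transpose_mat M) *\<^sub>v v) \<bullet> (M *\<^sub>v v) = v \<bullet> (transpose_mat M *\<^sub>v (M *\<^sub>v v))"
    by (rule transpose_vec_mult_scalar[OF _ Mv v], insert M, simp)
  also have "transpose_mat M *\<^sub>v (M *\<^sub>v v) = l \<cdot>\<^sub>v v" using Gv M v by simp
  finally have MvMv: "(M *\<^sub>v v) \<bullet> (M *\<^sub>v v) = l" using v vv by simp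
  then show l0: "0 \<le> l" using sp_self_nonneg[of "M *\<^sub>v v"] by simp
  have MTMv: "transpose_mat M *\<^sub>v (M *\<^sub>v v) = l \<cdot>\<^sub>v v" using Gv M v by simp
  show "\<exists>u. u \<in> carrier_vec k \<and> vnorm u = 1 \<and> M *\<^sub>v v = sqrt l \<cdot>\<^sub>v u
     \<and> transpose_mat M *\<^sub>v u = sqrt l \<cdot>\<^sub>v v"
  proof (cases "l = 0")
    case False
    then have s: "sqrt l > 0" using l0 by simp
    define u where "u = (1 / sqrt l) \<cdot>\<^sub>v (M *\<^sub>v v)"
    have u: "u \<in> carrier_vec k" unfolding u_def using Mv by simp
    have "vnorm (M *\<^sub>v v) = sqrt l" unfolding vnorm_def MvMv ..
    then have nu: "vnorm u = 1" unfolding u_def vnorm_smult using s by simp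
    have "M *\<^sub>v v = sqrt l \<cdot>\<^sub>v u" unfolding u_def using s Mv
      by (intro eq_vecI, auto)
    moreover have "transpose_mat M *\<^sub>v u = sqrt l \<cdot>\<^sub>v v"
    proof -
      have "transpose_mat M *\<^sub>v u = (1 / sqrt l) \<cdot>\<^sub>v (transpose_mat M *\<^sub>v (M *\<^sub>v v))"
        unfolding u_def by (rule mult_mat_vec[OF _ Mv], insert M, simp)
      also have "\<dots> = (1 / sqrt l) \<cdot>\<^sub>v (l \<cdot>\<^sub>v v)" unfolding MTMv ..
      also have "\<dots> = sqrt l \<cdot>\<^sub>v v"
      proof (rule eq_vecI)
        fix i assume "i < dim_vec (sqrt l \<cdot>\<^sub>v v)"
        have "1 / sqrt l * (l * v $ i) = (l / sqrt l) * v $ i" by simp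
        also have "l / sqrt l = sqrt l" by (rule real_div_sqrt[OF l0])
        finally show "((1 / sqrt l) \<cdot>\<^sub>v (l \<cdot>\<^sub>v v)) $ i = (sqrt l \<cdot>\<^sub>v v) $ i"
          using \<open>i < dim_vec (sqrt l \<cdot>\<^sub>v v)\<close> by simp
      qed simp
      finally show ?thesis .
    qed
    ultimately show ?thesis using u nu by blast
  next
    case True
    then have "M *\<^sub>v v = 0\<^sub>v k" using MvMv sp_self_zero[OF Mv] by simp
    moreover have "v \<noteq> 0\<^sub>v k" using nv by auto
    ultimately have "det M = 0" using det_0_iff_vec_prod_zero[OF M] v by blast
    then have "det (transpose_mat M) = 0" using det_transpose[OF M] by simp
    then obtain u0 where u0: "u0 \<in> carrier_vec k" "u0 \<noteq> 0\<^sub>v k" "transpose_mat M *\<^sub>v u0 = 0\<^sub>v k"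
      using det_0_iff_vec_prod_zero[of "transpose_mat M" k] M by auto
    have pos: "vnorm u0 > 0" using vnorm_nonneg[of u0] vnorm_zero[OF u0(1)] u0(2) by force
    define u where "u = (1 / vnorm u0) \<cdot>\<^sub>v u0"
    have u: "u \<in> carrier_vec k" unfolding u_def using u0 by simp
    have nu: "vnorm u = 1" unfolding u_def vnorm_smult using pos by simp
    have "(1 / vnorm u0) \<cdot>\<^sub>v 0\<^sub>v k = (0\<^sub>v k :: real vec)" by (intro eq_vecI, auto)
    have "transpose_mat M *\<^sub>v u = 0\<^sub>v k" unfolding u_def
      using mult_mat_vec[of "transpose_mat M" k k u0] M u0
        \<open>(1 / vnorm u0) \<cdot>\<^sub>v 0\<^sub>v k = (0\<^sub>v k :: real vec)\<close> by simp
    then show ?thesis using True u nu \<open>M *\<^sub>v v = 0\<^sub>v k\<close> u v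
      by (intro exI[of _ u], auto)
  qed
qed

lemma svd_exists: "(M :: real mat) \<in> carrier_mat k k \<Longrightarrow> \<exists>P Z Q. is_svd M P Z Q"
proof (induction k arbitrary: M)
  case 0
  have "M = 1\<^sub>m 0 * 1\<^sub>m 0 * transpose_mat (1\<^sub>m 0)" using 0 by (intro eq_matI, auto)
  then have "is_svd M (1\<^sub>m 0) (1\<^sub>m 0) (1\<^sub>m 0)" unfolding is_svd_def Let_def using 0 by auto
  then show ?case by blast
next
  case (Suc k')
  define K where "K = Suc k'"
  have M: "M \<in> carrier_mat K K" using Suc.prems K_def by simp
  have K0: "0 < K" unfolding K_def by simp
  define G where "G = transpose_mat M * M"
  have G: "G \<in> carrier_mat K K" unfolding G_def using M by simp
  have symG: "transpose_mat G = G" unfolding G_def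
    using transpose_mult[of "transpose_mat M" K K M K] M by simp
  obtain l v where v: "v \<in> carrier_vec K" and nv: "vnorm v = 1" and Gv: "G *\<^sub>v v = l \<cdot>\<^sub>v v"
    and mx: "\<And>mu w. w \<in> carrier_vec K \<Longrightarrow> w \<noteq> 0\<^sub>v K \<Longrightarrow> G *\<^sub>v w = mu \<cdot>\<^sub>v w \<Longrightarrow> mu \<le> l"
    using sym_max_eigen[OF G symG K0] by blast
  note st = svd_step_u[OF M v nv Gv[unfolded G_def]]
  have l0: "0 \<le> l" by (rule st(1))
  define s where "s = sqrt l"
  have s0: "0 \<le> s" unfolding s_def using l0 by simp
  obtain u where u: "u \<in> carrier_vec K" and nu: "vnorm u = 1" and Mv: "M *\<^sub>v v = s \<cdot>\<^sub>v u"
    and MTu: "transpose_mat M *\<^sub>v u = s \<cdot>\<^sub>v v" using st(2) unfolding s_def by blast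
  obtain Hu where Hu: "Hu \<in> carrier_mat K K" and oHu: "transpose_mat Hu * Hu = 1\<^sub>m K"
    and Hue: "Hu *\<^sub>v unit_vec K 0 = u" using householder_exists[OF u K0 nu] by blast
  obtain Hv where Hv: "Hv \<in> carrier_mat K K" and oHv: "transpose_mat Hv * Hv = 1\<^sub>m K"
    and Hve: "Hv *\<^sub>v unit_vec K 0 = v" using householder_exists[OF v K0 nv] by blast
  let ?e = "unit_vec K 0 :: real vec"
  have e: "?e \<in> carrier_vec K" by simp
  have HuTu: "transpose_mat Hu *\<^sub>v u = ?e" unfolding Hue[symmetric] by (rule orth_cancel_vec(2)[OF Hu oHu e])
  have HvTv: "transpose_mat Hv *\<^sub>v v = ?e" unfolding Hve[symmetric] by (rule orth_cancel_vec(2)[OF Hv oHv e])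
  define M1 where "M1 = transpose_mat Hu * M * Hv"
  have M1: "M1 \<in> carrier_mat K K" unfolding M1_def using Hu M Hv by simp
  have M1T: "transpose_mat M1 = transpose_mat Hv * transpose_mat M * Hu"
    unfolding M1_def using transpose3[of "transpose_mat Hu" K K M K Hv K] Hu M Hv by simp
  have c0: "M1 *\<^sub>v ?e = s \<cdot>\<^sub>v ?e"
  proof -
    have "M1 *\<^sub>v ?e = transpose_mat Hu *\<^sub>v (M *\<^sub>v (Hv *\<^sub>v ?e))"
      unfolding M1_def using Hu M Hv by (simp add: assoc_mult_mat_vec[of _ K K _ K])
    also have "\<dots> = transpose_mat Hu *\<^sub>v (s \<cdot>\<^sub>v u)" unfolding Hve Mv ..
    also have "\<dots> = s \<cdot>\<^sub>v (transpose_mat Hu *\<^sub>v u)" by (rule mult_mat_vec[OF _ u], insert Hu, simp)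
    finally show ?thesis unfolding HuTu .
  qed
  have r0: "transpose_mat M1 *\<^sub>v ?e = s \<cdot>\<^sub>v ?e"
  proof -
    have "transpose_mat M1 *\<^sub>v ?e = transpose_mat Hv *\<^sub>v (transpose_mat M *\<^sub>v (Hu *\<^sub>v ?e))"
      unfolding M1T using Hu M Hv by (simp add: assoc_mult_mat_vec[of _ K K _ K])
    also have "\<dots> = transpose_mat Hv *\<^sub>v (s \<cdot>\<^sub>v v)" unfolding Hue MTu ..
    also have "\<dots> = s \<cdot>\<^sub>v (transpose_mat Hv *\<^sub>v v)" by (rule mult_mat_vec[OF _ v], insert Hv, simp)
    finally show ?thesis unfolding HvTv .
  qed
  define M' where "M' = mat k' k' (\<lambda>(i,j). M1 $$ (Suc i, Suc j))"
  have M': "M' \<in> carrier_mat k' k'" unfolding M'_def by simp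
  have M1blk: "M1 = blk s M'" unfolding M'_def
    by (rule blk_decomp[OF M1[unfolded K_def] c0[unfolded K_def] r0[unfolded K_def]])
  obtain P' Z' Q' where svd': "is_svd M' P' Z' Q'" using Suc.IH[OF M'] by blast
  note d' = is_svdD[OF svd' M']
  define P where "P = Hu * blk 1 P'"
  define Z where "Z = blk s Z'"
  define Q where "Q = Hv * blk 1 Q'"
  have bP: "blk 1 P' \<in> carrier_mat K K" unfolding K_def using d' by simp
  have bQ: "blk 1 Q' \<in> carrier_mat K K" unfolding K_def using d' by simp
  have bZ: "blk s Z' \<in> carrier_mat K K" unfolding K_def using d' by simp
  have P: "P \<in> carrier_mat K K" unfolding P_def using Hu bP by simp
  have Q: "Q \<in> carrier_mat K K" unfolding Q_def using Hv bQ by simp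
  have Z: "Z \<in> carrier_mat K K" unfolding Z_def using bZ by simp
  have oP: "transpose_mat P * P = 1\<^sub>m K"
  proof -
    have "transpose_mat P = transpose_mat (blk 1 P') * transpose_mat Hu"
      unfolding P_def by (rule transpose_mult[OF Hu bP])
    then have "transpose_mat P * P = transpose_mat (blk 1 P') * (transpose_mat Hu * (Hu * blk 1 P'))"
      unfolding P_def using Hu bP by (simp add: assoc_mult_mat[of _ K K _ K _ K])
    also have "\<dots> = transpose_mat (blk 1 P') * blk 1 P'" using orth_cancel(2)[OF Hu oHu bP] by simp
    also have "\<dots> = blk 1 (transpose_mat P' * P')" unfolding blk_transpose
      by (subst blk_mult[of _ k' k' _ k'], insert d', auto)
    also have "\<dots> = 1\<^sub>m K" unfolding d'(4) blk_one K_def ..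
    finally show ?thesis .
  qed
  have oQ: "transpose_mat Q * Q = 1\<^sub>m K"
  proof -
    have "transpose_mat Q = transpose_mat (blk 1 Q') * transpose_mat Hv"
      unfolding Q_def by (rule transpose_mult[OF Hv bQ])
    then have "transpose_mat Q * Q = transpose_mat (blk 1 Q') * (transpose_mat Hv * (Hv * blk 1 Q'))"
      unfolding Q_def using Hv bQ by (simp add: assoc_mult_mat[of _ K K _ K _ K])
    also have "\<dots> = transpose_mat (blk 1 Q') * blk 1 Q'" using orth_cancel(2)[OF Hv oHv bQ] by simp
    also have "\<dots> = blk 1 (transpose_mat Q' * Q')" unfolding blk_transpose
      by (subst blk_mult[of _ k' k' _ k'], insert d', auto)
    also have "\<dots> = 1\<^sub>m K" unfolding d'(5) blk_one K_def ..
    finally show ?thesis .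
  qed
  have MPZQ: "M = P * Z * transpose_mat Q"
  proof -
    have "blk 1 P' * blk s Z' * blk 1 (transpose_mat Q') = blk s (P' * Z' * transpose_mat Q')"
      using d' by (simp add: blk_mult[of _ k' k' _ k'])
    also have "\<dots> = M1" unfolding M1blk d'(9)[symmetric] ..
    finally have inner: "blk 1 P' * blk s Z' * transpose_mat (blk 1 Q') = M1" unfolding blk_transpose .
    have tQ: "transpose_mat Q = transpose_mat (blk 1 Q') * transpose_mat Hv"
      unfolding Q_def by (rule transpose_mult[OF Hv bQ])
    have "P * Z * transpose_mat Q = Hu * ((blk 1 P' * blk s Z' * transpose_mat (blk 1 Q')) * transpose_mat Hv)"
      unfolding P_def Z_def tQ using Hu Hv bP bQ bZ by (simp add: assoc_mult_mat[of _ K K _ K _ K])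
    also have "\<dots> = Hu * (M1 * transpose_mat Hv)" unfolding inner ..
    also have "\<dots> = Hu * (transpose_mat Hu * (M * (Hv * transpose_mat Hv)))"
      unfolding M1_def using Hu Hv M by (simp add: assoc_mult_mat[of _ K K _ K _ K])
    also have "\<dots> = M" using orth_cancel(1)[OF Hu oHu, of M K] orth_right[OF Hv oHv] M by simp
    finally show ?thesis by simp
  qed
  have order0: "Z' $$ (0,0) \<le> s" if kp: "0 < k'"
  proof -
    define z0 where "z0 = Z' $$ (0,0)"
    let ?e' = "unit_vec k' 0 :: real vec"
    have e': "?e' \<in> carrier_vec k'" by simp
    define q where "q = Q' *\<^sub>v ?e'"
    define p where "p = P' *\<^sub>v ?e'"
    have q: "q \<in> carrier_vec k'" unfolding q_def using d' by simp
    have p: "p \<in> carrier_vec k'" unfolding p_def using d' by simp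
    have nq: "vnorm q = 1" unfolding q_def using orth_vnorm[OF d'(2) d'(5) e'] unit_vec_vnorm kp by simp
    have Ze: "Z' *\<^sub>v ?e' = z0 \<cdot>\<^sub>v ?e'"
      by (rule eq_vecI, insert d' kp, auto simp: diag_mult[OF d'(3) d'(6)] z0_def)
    have ZTe: "transpose_mat Z' *\<^sub>v ?e' = z0 \<cdot>\<^sub>v ?e'"
    proof -
      have "\<forall>i<k'. \<forall>j<k'. i \<noteq> j \<longrightarrow> transpose_mat Z' $$ (i, j) = 0" using d' by auto
      from diag_mult[OF _ this] show ?thesis
        by (intro eq_vecI, insert d' kp, auto simp: z0_def)
    qed
    have Mq: "M' *\<^sub>v q = z0 \<cdot>\<^sub>v p"
    proof -
      have "M' *\<^sub>v q = P' *\<^sub>v (Z' *\<^sub>v (transpose_mat Q' *\<^sub>v (Q' *\<^sub>v ?e')))"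
        unfolding q_def d'(9) using d' by (simp add: assoc_mult_mat_vec[of _ k' k' _ k'])
      also have "\<dots> = P' *\<^sub>v (z0 \<cdot>\<^sub>v ?e')" unfolding orth_cancel_vec(2)[OF d'(2) d'(5) e'] Ze ..
      also have "\<dots> = z0 \<cdot>\<^sub>v p" unfolding p_def by (rule mult_mat_vec[OF d'(1) e'])
      finally show ?thesis .
    qed
    have M'T: "transpose_mat M' = Q' * transpose_mat Z' * transpose_mat P'"
      unfolding d'(9) using transpose3[OF d'(1) d'(3), of "transpose_mat Q'" k'] d' by simp
    have MTp: "transpose_mat M' *\<^sub>v p = z0 \<cdot>\<^sub>v q"
    proof -
      have "transpose_mat M' *\<^sub>v p = Q' *\<^sub>v (transpose_mat Z' *\<^sub>v (transpose_mat P' *\<^sub>v (P' *\<^sub>v ?e')))"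
        unfolding M'T p_def using d' by (simp add: assoc_mult_mat_vec[of _ k' k' _ k'])
      also have "\<dots> = Q' *\<^sub>v (z0 \<cdot>\<^sub>v ?e')" unfolding orth_cancel_vec(2)[OF d'(1) d'(4) e'] ZTe ..
      also have "\<dots> = z0 \<cdot>\<^sub>v q" unfolding q_def by (rule mult_mat_vec[OF d'(2) e'])
      finally show ?thesis .
    qed
    have MTMq: "transpose_mat M' *\<^sub>v (M' *\<^sub>v q) = (z0 * z0) \<cdot>\<^sub>v q"
      unfolding Mq using mult_mat_vec[of "transpose_mat M'" k' k' p z0] M' p MTp
      by (simp add: smult_smult_assoc)
    define w where "w = Hv *\<^sub>v padb 1 K q"
    have w: "w \<in> carrier_vec K" unfolding w_def using Hv by simp
    have nw: "vnorm w = 1" unfolding w_def using orth_vnorm[OF Hv oHv] vnorm_padb[of q K 1] q nq K_def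
      by simp
    have w0: "w \<noteq> 0\<^sub>v K" using nw by auto
    have MHv: "M * Hv = Hu * M1"
      unfolding M1_def using orth_cancel(1)[OF Hu oHu, of "M * Hv" K] Hu M Hv
      by (simp add: assoc_mult_mat[of _ K K _ K _ K])
    have MTHu: "transpose_mat M * Hu = Hv * transpose_mat M1"
      unfolding M1T using orth_cancel(1)[OF Hv oHv, of "transpose_mat M * Hu" K] Hu M Hv
      by (simp add: assoc_mult_mat[of _ K K _ K _ K])
    have pq: "padb 1 K q \<in> carrier_vec K" by simp
    have "M *\<^sub>v w = (M * Hv) *\<^sub>v padb 1 K q" unfolding w_def using M Hv by simp
    also have "\<dots> = Hu *\<^sub>v (M1 *\<^sub>v padb 1 K q)" unfolding MHv using Hu M1 by simp
    also have "M1 *\<^sub>v padb 1 K q = padb 1 K (M' *\<^sub>v q)" unfolding M1blk K_def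
      by (rule blk_vec[OF M' q])
    finally have Mw: "M *\<^sub>v w = Hu *\<^sub>v padb 1 K (M' *\<^sub>v q)" .
    have "G *\<^sub>v w = transpose_mat M *\<^sub>v (M *\<^sub>v w)" unfolding G_def using M w by simp
    also have "\<dots> = (transpose_mat M * Hu) *\<^sub>v padb 1 K (M' *\<^sub>v q)" unfolding Mw using M Hu by simp
    also have "\<dots> = Hv *\<^sub>v (transpose_mat M1 *\<^sub>v padb 1 K (M' *\<^sub>v q))" unfolding MTHu using Hv M1 by simp
    also have "transpose_mat M1 *\<^sub>v padb 1 K (M' *\<^sub>v q) = padb 1 K (transpose_mat M' *\<^sub>v (M' *\<^sub>v q))"
      unfolding M1blk blk_transpose K_def by (rule blk_vec, insert M' q, auto)
    also have "\<dots> = (z0 * z0) \<cdot>\<^sub>v padb 1 K q" unfolding MTMq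
      by (rule eq_vecI, insert q, auto simp: padb_def K_def)
    also have "Hv *\<^sub>v ((z0 * z0) \<cdot>\<^sub>v padb 1 K q) = (z0 * z0) \<cdot>\<^sub>v w" unfolding w_def
      by (rule mult_mat_vec[OF Hv pq])
    finally have "G *\<^sub>v w = (z0 * z0) \<cdot>\<^sub>v w" .
    from mx[OF w w0 this] have "z0 * z0 \<le> l" .
    moreover have "0 \<le> z0" using d'(7) kp z0_def by auto
    ultimately have A: "sqrt (z0 * z0) \<le> sqrt l" by (rule_tac real_sqrt_le_mono, simp)
    have B: "sqrt (z0 * z0) = z0" using \<open>0 \<le> z0\<close> by (simp add: real_sqrt_mult_self)
    show ?thesis using A B unfolding z0_def s_def by simp
  qed
  have Zi: "Z $$ (i,j) = (if i = 0 then (if j = 0 then s else 0) else if j = 0 then 0 else Z' $$ (i-1, j-1))"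
    if "i < K" "j < K" for i j
    unfolding Z_def using blk_index[of i Z' j s] that d' K_def by simp
  have Zd: "\<forall>i<K. \<forall>j<K. i \<noteq> j \<longrightarrow> Z $$ (i, j) = 0"
  proof (intro allI impI)
    fix i j assume "i < K" "j < K" "i \<noteq> j"
    then show "Z $$ (i, j) = 0" using Zi[of i j] d'(6) K_def by (cases i; cases j; auto)
  qed
  have Zn: "\<forall>i<min K K. 0 \<le> Z $$ (i, i)"
  proof (intro allI impI)
    fix i assume "i < min K K"
    then show "0 \<le> Z $$ (i, i)" using Zi[of i i] d'(7) s0 K_def by (cases i; auto)
  qed
  have Zo: "\<forall>i j. i \<le> j \<longrightarrow> j < min K K \<longrightarrow> Z $$ (j, j) \<le> Z $$ (i, i)"
  proof (intro allI impI)
    fix i j assume ij: "i \<le> j" "j < min K K"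
    show "Z $$ (j, j) \<le> Z $$ (i, i)"
    proof (cases j)
      case 0 then show ?thesis using ij by simp
    next
      case (Suc j1)
      then have kp: "0 < k'" using ij K_def by simp
      show ?thesis
      proof (cases i)
        case 0
        have "Z' $$ (j1, j1) \<le> Z' $$ (0, 0)" using d'(8) Suc ij K_def by auto
        then show ?thesis using Zi[of i i] Zi[of j j] 0 Suc ij order0[OF kp] by auto
      next
        case (Suc i1)
        then show ?thesis using Zi[of i i] Zi[of j j] \<open>j = Suc j1\<close> ij d'(8) K_def by auto
      qed
    qed
  qed
  have "is_svd M P Z Q" unfolding is_svd_def Let_def
    using M P Q Z oP oQ Zd Zn Zo MPZQ by simp
  then show ?case by blast
qed

lemma diag_sq_sum:
  fixes S :: "real mat"
  assumes S: "S \<in> carrier_mat n m" and d: "\<forall>i<n. \<forall>j<m. i \<noteq> j \<longrightarrow> S $$ (i, j) = 0"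
    and y: "y \<in> carrier_vec m" and a: "a \<le> n"
  shows "(\<Sum>i\<in>{a..<n}. ((S *\<^sub>v y) $ i)^2) = (\<Sum>i\<in>{a..<min n m}. (S $$ (i,i) * y $ i)^2)"
proof -
  have "(\<Sum>i\<in>{a..<n}. ((S *\<^sub>v y) $ i)^2) = (\<Sum>i\<in>{a..<n}. (if i < m then (S $$ (i,i) * y $ i)^2 else 0))"
    by (rule sum.cong, auto simp: diag_mult[OF S d y])
  also have "\<dots> = (\<Sum>i\<in>{a..<min n m}. (if i < m then (S $$ (i,i) * y $ i)^2 else 0))"
    by (rule sum.mono_neutral_right, auto)
  also have "\<dots> = (\<Sum>i\<in>{a..<min n m}. (S $$ (i,i) * y $ i)^2)"
    by (rule sum.cong, auto)
  finally show ?thesis .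
qed

lemma tail_sq_sum: "v \<in> carrier_vec k \<Longrightarrow> r \<le> k \<Longrightarrow>
   (vnorm (tailv r v))^2 = (\<Sum>i\<in>{r..<k}. (v $ i)^2)"
  unfolding vnorm_sq_sum tailv_def
  using sum.shift_bounds_nat_ivl[of "\<lambda>i. (v $ i)^2" 0 r "k - r"]
  by (simp add: atLeast0LessThan[symmetric])

lemma full_sq_sum: "v \<in> carrier_vec k \<Longrightarrow> (vnorm v)^2 = (\<Sum>i\<in>{0..<k}. (v $ i)^2)"
  unfolding vnorm_sq_sum by (simp add: atLeast0LessThan)

lemma tail_diag_bound:
  fixes S :: "real mat"
  assumes S: "S \<in> carrier_mat n m" and d: "\<forall>i<n. \<forall>j<m. i \<noteq> j \<longrightarrow> S $$ (i, j) = 0"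
    and nn: "\<forall>i<min n m. 0 \<le> S $$ (i, i)"
    and ord: "\<forall>i j. i \<le> j \<longrightarrow> j < min n m \<longrightarrow> S $$ (j, j) \<le> S $$ (i, i)"
    and y: "y \<in> carrier_vec m" and r: "r < min n m"
  shows "vnorm (tailv r (S *\<^sub>v y)) \<le> S $$ (r,r) * vnorm (tailv r y)"
proof -
  have s0: "0 \<le> S $$ (r,r)" using nn r by auto
  have Sy: "S *\<^sub>v y \<in> carrier_vec n" using S y by simp
  have "(vnorm (tailv r (S *\<^sub>v y)))^2 = (\<Sum>i\<in>{r..<min n m}. (S $$ (i,i) * y $ i)^2)"
    using tail_sq_sum[OF Sy, of r] diag_sq_sum[OF S d y, of r] r by simp
  also have "\<dots> \<le> (\<Sum>i\<in>{r..<min n m}. (S $$ (r,r))^2 * (y $ i)^2)"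
  proof (rule sum_mono)
    fix i assume i: "i \<in> {r..<min n m}"
    have "0 \<le> S $$ (i,i)" "S $$ (i,i) \<le> S $$ (r,r)" using nn ord i by auto
    then have "(S $$ (i,i))^2 \<le> (S $$ (r,r))^2" by (simp add: power_mono)
    then show "(S $$ (i,i) * y $ i)^2 \<le> (S $$ (r,r))^2 * (y $ i)^2"
      by (simp add: power_mult_distrib mult_right_mono)
  qed
  also have "\<dots> \<le> (\<Sum>i\<in>{r..<m}. (S $$ (r,r))^2 * (y $ i)^2)"
    by (rule sum_mono2, auto)
  also have "\<dots> = (S $$ (r,r))^2 * (vnorm (tailv r y))^2"
    using tail_sq_sum[OF y, of r] r by (simp add: sum_distrib_left)
  finally have "(vnorm (tailv r (S *\<^sub>v y)))^2 \<le> (S $$ (r,r) * vnorm (tailv r y))^2"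
    by (simp add: power_mult_distrib)
  then show ?thesis using s0 vnorm_nonneg[of "tailv r y"]
    by (meson mult_nonneg_nonneg power2_le_imp_le)
qed

lemma head_diag_lower:
  fixes S :: "real mat"
  assumes S: "S \<in> carrier_mat n m" and d: "\<forall>i<n. \<forall>j<m. i \<noteq> j \<longrightarrow> S $$ (i, j) = 0"
    and nn: "\<forall>i<min n m. 0 \<le> S $$ (i, i)"
    and ord: "\<forall>i j. i \<le> j \<longrightarrow> j < min n m \<longrightarrow> S $$ (j, j) \<le> S $$ (i, i)"
    and c: "c \<in> carrier_vec r" and r: "r \<le> min n m" and r1: "1 \<le> r"
  shows "S $$ (r-1,r-1) * vnorm c \<le> vnorm (S *\<^sub>v padt m c)"
proof -
  let ?s = "S $$ (r-1,r-1)"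
  have r1m: "r - 1 < min n m" using r r1 by auto
  have s0: "0 \<le> ?s" using nn[rule_format, OF r1m] .
  have pc: "padt m c \<in> carrier_vec m" by simp
  have Sy: "S *\<^sub>v padt m c \<in> carrier_vec n" using S by simp
  have "(?s * vnorm c)^2 = (\<Sum>i\<in>{0..<r}. ?s^2 * (c $ i)^2)"
    using full_sq_sum[OF c] by (simp add: power_mult_distrib sum_distrib_left)
  also have "\<dots> \<le> (\<Sum>i\<in>{0..<r}. (S $$ (i,i) * padt m c $ i)^2)"
  proof (rule sum_mono)
    fix i assume i: "i \<in> {0..<r}"
    have ir: "i \<le> r - 1" "r - 1 < min n m" using i r r1 by auto
    have "?s \<le> S $$ (i,i)" using ord[rule_format, OF ir(1) ir(2)] .
    note s0 this
    then have "?s^2 \<le> (S $$ (i,i))^2" by (simp add: power_mono)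
    then show "?s^2 * (c $ i)^2 \<le> (S $$ (i,i) * padt m c $ i)^2"
      using i c r by (simp add: power_mult_distrib mult_right_mono padt_def)
  qed
  also have "\<dots> \<le> (\<Sum>i\<in>{0..<min n m}. (S $$ (i,i) * padt m c $ i)^2)"
    by (rule sum_mono2, insert r, auto)
  also have "\<dots> = (vnorm (S *\<^sub>v padt m c))^2"
    using full_sq_sum[OF Sy] diag_sq_sum[OF S d pc, of 0] by simp
  finally show ?thesis using vnorm_nonneg[of "S *\<^sub>v padt m c"]
    by (meson power2_le_imp_le)
qed

lemma diag_upper_from:
  fixes S :: "real mat"
  assumes S: "S \<in> carrier_mat n m" and d: "\<forall>i<n. \<forall>j<m. i \<noteq> j \<longrightarrow> S $$ (i, j) = 0"
    and nn: "\<forall>i<min n m. 0 \<le> S $$ (i, i)"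
    and ord: "\<forall>i j. i \<le> j \<longrightarrow> j < min n m \<longrightarrow> S $$ (j, j) \<le> S $$ (i, i)"
    and u: "u \<in> carrier_vec m" and r: "r < min n m" and z: "\<forall>i<r. u $ i = 0"
  shows "vnorm (S *\<^sub>v u) \<le> S $$ (r,r) * vnorm u"
proof -
  let ?s = "S $$ (r,r)"
  have s0: "0 \<le> ?s" using nn r by auto
  have Sy: "S *\<^sub>v u \<in> carrier_vec n" using S u by simp
  have "(vnorm (S *\<^sub>v u))^2 = (\<Sum>i\<in>{0..<min n m}. (S $$ (i,i) * u $ i)^2)"
    using full_sq_sum[OF Sy] diag_sq_sum[OF S d u, of 0] by simp
  also have "\<dots> \<le> (\<Sum>i\<in>{0..<min n m}. ?s^2 * (u $ i)^2)"
  proof (rule sum_mono)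
    fix i assume i: "i \<in> {0..<min n m}"
    show "(S $$ (i,i) * u $ i)^2 \<le> ?s^2 * (u $ i)^2"
    proof (cases "i < r")
      case True then show ?thesis using z by simp
    next
      case False
      have "0 \<le> S $$ (i,i)" "S $$ (i,i) \<le> ?s" using nn ord i False by auto
      then have "(S $$ (i,i))^2 \<le> ?s^2" by (simp add: power_mono)
      then show ?thesis by (simp add: power_mult_distrib mult_right_mono)
    qed
  qed
  also have "\<dots> \<le> (\<Sum>i\<in>{0..<m}. ?s^2 * (u $ i)^2)"
    by (rule sum_mono2, auto)
  also have "\<dots> = (?s * vnorm u)^2"
    using full_sq_sum[OF u] by (simp add: power_mult_distrib sum_distrib_left)
  finally show ?thesis using s0 vnorm_nonneg[of u]
    by (meson mult_nonneg_nonneg power2_le_imp_le)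
qed

lemma cols_upto_carrier': "U \<in> carrier_mat n k \<Longrightarrow> cols_upto r U \<in> carrier_mat n r"
  using cols_upto_carrier[of r U] by auto
lemma cols_from_carrier': "U \<in> carrier_mat n k \<Longrightarrow> cols_from r U \<in> carrier_mat n (k - r)"
  using cols_from_carrier[of r U] by auto

lemma proj_norm:
  fixes U Ut :: "real mat"
  assumes U: "U \<in> carrier_mat n n" and oU: "transpose_mat U * U = 1\<^sub>m n"
    and Ut: "Ut \<in> carrier_mat n n" and oUt: "transpose_mat Ut * Ut = 1\<^sub>m n"
    and r: "r \<le> n" and q: "q \<in> carrier_vec r"
  shows "(vnorm ((transpose_mat (cols_upto r U) * cols_upto r Ut) *\<^sub>v q))^2
       + (vnorm ((transpose_mat (cols_from r U) * cols_upto r Ut) *\<^sub>v q))^2 = (vnorm q)^2"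
proof -
  define y where "y = transpose_mat U *\<^sub>v (cols_upto r Ut *\<^sub>v q)"
  have Ut1: "cols_upto r Ut \<in> carrier_mat n r" by (rule cols_upto_carrier'[OF Ut])
  have Ut1q: "cols_upto r Ut *\<^sub>v q \<in> carrier_vec n" using Ut1 q by simp
  have y: "y \<in> carrier_vec n" unfolding y_def using U Ut1q by simp
  have U1T: "transpose_mat (cols_upto r U) \<in> carrier_mat r n" using cols_upto_carrier'[OF U, of r] by simp
  have U2T: "transpose_mat (cols_from r U) \<in> carrier_mat (n - r) n" using cols_from_carrier'[OF U, of r] by simp
  have "(transpose_mat (cols_upto r U) * cols_upto r Ut) *\<^sub>v q = transpose_mat (cols_upto r U) *\<^sub>v (cols_upto r Ut *\<^sub>v q)"
    by (rule assoc_mult_mat_vec[OF U1T Ut1 q])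
  also have "\<dots> = headv r y" unfolding y_def by (rule cols_upto_tmult[OF U Ut1q r])
  finally have h: "(transpose_mat (cols_upto r U) * cols_upto r Ut) *\<^sub>v q = headv r y" .
  have "(transpose_mat (cols_from r U) * cols_upto r Ut) *\<^sub>v q = transpose_mat (cols_from r U) *\<^sub>v (cols_upto r Ut *\<^sub>v q)"
    by (rule assoc_mult_mat_vec[OF U2T Ut1 q])
  also have "\<dots> = tailv r y" unfolding y_def by (rule cols_from_tmult[OF U Ut1q r])
  finally have t: "(transpose_mat (cols_from r U) * cols_upto r Ut) *\<^sub>v q = tailv r y" .
  have "vnorm y = vnorm (cols_upto r Ut *\<^sub>v q)" unfolding y_def by (rule orth_vnorm_T[OF U oU Ut1q])
  also have "\<dots> = vnorm (Ut *\<^sub>v padt n q)" unfolding cols_upto_mult[OF Ut q r] ..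
  also have "\<dots> = vnorm (padt n q)" by (rule orth_vnorm[OF Ut oUt], simp)
  also have "\<dots> = vnorm q" by (rule vnorm_padt, insert q r, simp)
  finally have yq: "vnorm y = vnorm q" .
  have sp: "(vnorm y)^2 = (vnorm (headv r y))^2 + (vnorm (tailv r y))^2" by (rule vnorm_split[OF y r])
  show ?thesis unfolding h t sp[unfolded yq, symmetric] ..
qed

lemma sin_theta_le:
  fixes U Ut :: "real mat"
  assumes U: "U \<in> carrier_mat n n" and oU: "transpose_mat U * U = 1\<^sub>m n"
    and Ut: "Ut \<in> carrier_mat n n" and oUt: "transpose_mat Ut * Ut = 1\<^sub>m n"
    and r0: "0 < r" and r: "r \<le> n" and c0: "0 \<le> c"
    and bnd: "\<And>w. w \<in> carrier_vec r \<Longrightarrow>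
       vnorm ((transpose_mat (cols_from r U) * cols_upto r Ut) *\<^sub>v w) \<le> c * vnorm w"
  shows "spec_norm (sin_theta (cols_upto r U) (cols_upto r Ut)) \<le> c"
proof -
  define M where "M = transpose_mat (cols_upto r U) * cols_upto r Ut"
  define X where "X = transpose_mat (cols_from r U) * cols_upto r Ut"
  have M: "M \<in> carrier_mat r r" unfolding M_def
    using cols_upto_carrier'[OF U, of r] cols_upto_carrier'[OF Ut, of r] by simp
  define z where "z = singular_values M"
  have "\<exists>z. \<exists>P Z Q. is_svd M P Z Q \<and> (\<forall>i. z i = (if i < min (dim_row M) (dim_col M) then Z $$ (i, i) else 0))"
  proof -
    obtain P Z Q where "is_svd M P Z Q" using svd_exists[OF M] by blast
    then show ?thesis
      by (intro exI[of _ "\<lambda>i. if i < min (dim_row M) (dim_col M) then Z $$ (i, i) else 0"]) blast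
  qed
  from someI_ex[OF this] obtain P Z Q where svd: "is_svd M P Z Q"
    and zi: "\<forall>i. z i = (if i < min (dim_row M) (dim_col M) then Z $$ (i, i) else 0)"
    unfolding z_def singular_values_def by blast
  note d = is_svdD[OF svd M]
  have zz: "z i = Z $$ (i,i)" if "i < r" for i using zi that M by simp
  have per: "0 \<le> 1 - (z i)^2 \<and> 1 - (z i)^2 \<le> c^2" if i: "i < r" for i
  proof -
    let ?e = "unit_vec r i :: real vec"
    define q where "q = Q *\<^sub>v ?e"
    have q: "q \<in> carrier_vec r" unfolding q_def using d by simp
    have nq: "vnorm q = 1" unfolding q_def using orth_vnorm[OF d(2) d(5)] unit_vec_vnorm i by simp
    have Ze: "Z *\<^sub>v ?e = z i \<cdot>\<^sub>v ?e"
      by (rule eq_vecI, insert d i, auto simp: diag_mult[OF d(3) d(6)] zz)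
    have "M *\<^sub>v q = P *\<^sub>v (Z *\<^sub>v (transpose_mat Q *\<^sub>v (Q *\<^sub>v ?e)))"
      unfolding q_def using d by (simp add: assoc_mult_mat_vec[of _ r r _ r])
    also have "\<dots> = P *\<^sub>v (z i \<cdot>\<^sub>v ?e)" using orth_cancel_vec(2)[OF d(2) d(5), of ?e] Ze by simp
    also have "\<dots> = z i \<cdot>\<^sub>v (P *\<^sub>v ?e)" by (rule mult_mat_vec[OF d(1)], simp)
    finally have "vnorm (M *\<^sub>v q) = \<bar>z i\<bar> * vnorm (P *\<^sub>v ?e)" by (simp add: vnorm_smult)
    also have "vnorm (P *\<^sub>v ?e) = 1" using orth_vnorm[OF d(1) d(4)] unit_vec_vnorm i by simp
    finally have Mq: "vnorm (M *\<^sub>v q) = \<bar>z i\<bar>" by simp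
    have sum: "(vnorm (M *\<^sub>v q))^2 + (vnorm (X *\<^sub>v q))^2 = 1"
      using proj_norm[OF U oU Ut oUt r q] nq unfolding M_def X_def by simp
    have "vnorm (X *\<^sub>v q) \<le> c" using bnd[OF q] nq unfolding X_def by simp
    then have "(vnorm (X *\<^sub>v q))^2 \<le> c^2" using vnorm_nonneg by (simp add: power_mono)
    moreover have "(vnorm (M *\<^sub>v q))^2 = (z i)^2" using Mq by simp
    ultimately show ?thesis using sum zero_le_power2[of "vnorm (X *\<^sub>v q)"] by linarith
  qed
  have ST: "sin_theta (cols_upto r U) (cols_upto r Ut) =
      mat r r (\<lambda>(i, j). if i = j then sqrt (1 - (z i)\<^sup>2) else 0)"
    unfolding sin_theta_def Let_def z_def M_def by simp
  show ?thesis unfolding ST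
  proof (rule spec_norm_le[of _ r r], simp, rule r0)
    fix w :: "real vec" assume w: "w \<in> carrier_vec r"
    let ?D = "mat r r (\<lambda>(i, j). if i = j then sqrt (1 - (z i)\<^sup>2) else 0) :: real mat"
    have D: "?D \<in> carrier_mat r r" by simp
    have dD: "\<forall>i<r. \<forall>j<r. i \<noteq> j \<longrightarrow> ?D $$ (i, j) = 0" by simp
    have Dw: "D' \<in> carrier_vec r \<Longrightarrow> True" for D' :: "real vec" by simp
    have "(vnorm (?D *\<^sub>v w))^2 = (\<Sum>i\<in>{0..<r}. (?D $$ (i,i) * w $ i)^2)"
      using full_sq_sum[of "?D *\<^sub>v w" r] diag_sq_sum[OF D dD w, of 0] D w by simp
    also have "\<dots> \<le> (\<Sum>i\<in>{0..<r}. c^2 * (w $ i)^2)"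
    proof (rule sum_mono)
      fix i assume "i \<in> {0..<r}"
      then have i: "i < r" by simp
      have "(?D $$ (i,i))^2 = 1 - (z i)^2" using i per[OF i] by simp
      then show "(?D $$ (i,i) * w $ i)^2 \<le> c^2 * (w $ i)^2"
        using per[OF i] by (simp add: power_mult_distrib mult_right_mono)
    qed
    also have "\<dots> = (c * vnorm w)^2" using full_sq_sum[OF w] by (simp add: power_mult_distrib sum_distrib_left)
    finally show "vnorm (?D *\<^sub>v w) \<le> c * vnorm w" using c0 vnorm_nonneg[of w]
      by (meson mult_nonneg_nonneg power2_le_imp_le)
  qed
qed

lemma proj_le_one:
  fixes U Ut :: "real mat"
  assumes U: "U \<in> carrier_mat n n" and oU: "transpose_mat U * U = 1\<^sub>m n"
    and Ut: "Ut \<in> carrier_mat n n" and oUt: "transpose_mat Ut * Ut = 1\<^sub>m n"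
    and r: "r \<le> n" and q: "q \<in> carrier_vec r"
  shows "vnorm ((transpose_mat (cols_from r U) * cols_upto r Ut) *\<^sub>v q) \<le> 1 * vnorm q"
proof -
  let ?a = "vnorm ((transpose_mat (cols_upto r U) * cols_upto r Ut) *\<^sub>v q)"
  let ?b = "vnorm ((transpose_mat (cols_from r U) * cols_upto r Ut) *\<^sub>v q)"
  have eq: "?a^2 + ?b^2 = (vnorm q)^2" by (rule proj_norm[OF assms])
  have "?b^2 \<le> (vnorm q)^2" using eq zero_le_power2[of ?a] by linarith
  then have "?b \<le> vnorm q" by (rule power2_le_imp_le[OF _ vnorm_nonneg])
  then show ?thesis by simp
qed

lemma tailv_add: "a \<in> carrier_vec k \<Longrightarrow> b \<in> carrier_vec k \<Longrightarrow> tailv r (a + b) = tailv r a + tailv r b"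
  by (rule eq_vecI, auto simp: tailv_def)

locale svdpert =
  fixes A E U S V Ut St Vt :: "real mat" and n m r :: nat
  assumes A: "A \<in> carrier_mat n m" and E: "E \<in> carrier_mat n m" and r1: "1 \<le> r" and rn: "r < min n m"
    and svd1: "is_svd A U S V" and svd2: "is_svd (A + E) Ut St Vt"
begin

lemma AE: "A + E \<in> carrier_mat n m" using A E by simp

lemmas d1 = is_svdD[OF svd1 A]
lemmas d2 = is_svdD[OF svd2 AE]

lemma rn': "r < n" "r < m" "r \<le> n" "r \<le> m" using rn by auto

lemma U: "U \<in> carrier_mat n n" and V: "V \<in> carrier_mat m m" and S: "S \<in> carrier_mat n m"
  and Ut: "Ut \<in> carrier_mat n n" and Vt: "Vt \<in> carrier_mat m m" and St: "St \<in> carrier_mat n m"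
  using d1 d2 by auto

lemma U2T: "transpose_mat (cols_from r U) \<in> carrier_mat (n - r) n"
  using cols_from_carrier'[OF U, of r] by simp
lemma Ut1: "cols_upto r Ut \<in> carrier_mat n r" by (rule cols_upto_carrier'[OF Ut])
lemma V1: "cols_upto r V \<in> carrier_mat m r" by (rule cols_upto_carrier'[OF V])
lemma V2: "cols_from r V \<in> carrier_mat m (m - r)" by (rule cols_from_carrier'[OF V])
lemma V2T: "transpose_mat (cols_from r V) \<in> carrier_mat (m - r) m"
  using V2 by simp
lemma Vt1: "cols_upto r Vt \<in> carrier_mat m r" by (rule cols_upto_carrier'[OF Vt])

definition "XX = transpose_mat (cols_from r U) * cols_upto r Ut"
definition "YY = transpose_mat (cols_from r V) * cols_upto r Vt"
definition "xn = spec_norm XX"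
definition "yn = spec_norm YY"
definition "en = spec_norm E"
definition "tt = St $$ (r - 1, r - 1)"
definition "ss = S $$ (r, r)"
definition "sr = S $$ (r - 1, r - 1)"
definition "a21 = spec_norm (transpose_mat (cols_from r U) * E * cols_upto r V)"
definition "a22 = spec_norm (transpose_mat (cols_from r U) * E * cols_from r V)"

lemma XX: "XX \<in> carrier_mat (n - r) r" unfolding XX_def using U2T Ut1 by simp
lemma YY: "YY \<in> carrier_mat (m - r) r" unfolding YY_def using V2T Vt1 by simp
lemma M21: "transpose_mat (cols_from r U) * E * cols_upto r V \<in> carrier_mat (n - r) r"
  using U2T E V1 by simp
lemma M22: "transpose_mat (cols_from r U) * E * cols_from r V \<in> carrier_mat (n - r) (m - r)"
  using U2T E V2 by simp

lemma nonnegs: "0 \<le> xn" "0 \<le> yn" "0 \<le> en" "0 \<le> a21" "0 \<le> a22"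
  unfolding xn_def yn_def en_def a21_def a22_def
  using spec_norm_nonneg[OF XX] spec_norm_nonneg[OF YY] spec_norm_nonneg[OF E]
    spec_norm_nonneg[OF M21] spec_norm_nonneg[OF M22] r1 rn' by auto

lemma ss_props: "0 \<le> ss" "ss \<le> sr" "0 \<le> sr"
proof -
  have "r < min n m" "r - 1 \<le> r" "r - 1 < min n m" using rn by auto
  then show "0 \<le> ss" "ss \<le> sr" "0 \<le> sr" unfolding ss_def sr_def using d1(7,8) by blast+
qed

lemma tt_props: "0 \<le> tt" "\<And>i. i < r \<Longrightarrow> tt \<le> St $$ (i,i)"
proof -
  have r1m: "r - 1 < min n m" using rn by auto
  show "0 \<le> tt" unfolding tt_def using d2(7) r1m by blast
  fix i assume i: "i < r"
  then have "i \<le> r - 1" by simp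
  then show "tt \<le> St $$ (i,i)" unfolding tt_def using d2(8) r1m by blast
qed

lemma tail_U: "y \<in> carrier_vec n \<Longrightarrow> vnorm (transpose_mat (cols_from r U) *\<^sub>v y) \<le> vnorm y"
proof -
  assume y: "y \<in> carrier_vec n"
  have "transpose_mat (cols_from r U) *\<^sub>v y = tailv r (transpose_mat U *\<^sub>v y)"
    by (rule cols_from_tmult[OF U y rn'(3)])
  moreover have "vnorm (tailv r (transpose_mat U *\<^sub>v y)) \<le> vnorm (transpose_mat U *\<^sub>v y)"
    by (rule vnorm_tailv_le[of _ n], insert U y rn', auto)
  moreover have "vnorm (transpose_mat U *\<^sub>v y) = vnorm y" by (rule orth_vnorm_T[OF U d1(4) y])
  ultimately show ?thesis by simp
qed

lemma key_id:
  assumes c: "c \<in> carrier_vec r"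
  defines "zz \<equiv> Vt *\<^sub>v padt m c"
  shows "XX *\<^sub>v vec r (\<lambda>i. St $$ (i,i) * c $ i)
     = tailv r (S *\<^sub>v (transpose_mat V *\<^sub>v zz)) + transpose_mat (cols_from r U) *\<^sub>v (E *\<^sub>v zz)"
proof -
  define w where "w = vec r (\<lambda>i. St $$ (i,i) * c $ i)"
  have w: "w \<in> carrier_vec r" unfolding w_def by simp
  have zz: "zz \<in> carrier_vec m" unfolding zz_def using Vt by simp
  have pc: "padt m c \<in> carrier_vec m" by simp
  have s1: "XX *\<^sub>v w = transpose_mat (cols_from r U) *\<^sub>v (cols_upto r Ut *\<^sub>v w)"
    unfolding XX_def by (rule assoc_mult_mat_vec[OF U2T Ut1 w])
  have s2: "cols_upto r Ut *\<^sub>v w = Ut *\<^sub>v padt n w" by (rule cols_upto_mult[OF Ut w rn'(3)])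
  have s3: "padt n w = St *\<^sub>v padt m c"
  proof (rule eq_vecI)
    fix i assume "i < dim_vec (St *\<^sub>v padt m c)"
    then have i: "i < n" using St by simp
    show "padt n w $ i = (St *\<^sub>v padt m c) $ i"
      unfolding diag_mult[OF St d2(6) pc i] using i rn' c by (auto simp: padt_def w_def)
  qed (insert St, simp)
  have s4: "St *\<^sub>v padt m c = St *\<^sub>v (transpose_mat Vt *\<^sub>v zz)"
    unfolding zz_def using orth_cancel_vec(2)[OF Vt d2(5) pc] by simp
  have s5: "Ut *\<^sub>v (St *\<^sub>v (transpose_mat Vt *\<^sub>v zz)) = (A + E) *\<^sub>v zz"
  proof -
    have "(A + E) *\<^sub>v zz = (Ut * St * transpose_mat Vt) *\<^sub>v zz" using d2(9) by simp
    also have "\<dots> = (Ut * St) *\<^sub>v (transpose_mat Vt *\<^sub>v zz)"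
      by (rule assoc_mult_mat_vec[of _ n m _ m], insert Ut St Vt zz, auto)
    also have "\<dots> = Ut *\<^sub>v (St *\<^sub>v (transpose_mat Vt *\<^sub>v zz))"
      by (rule assoc_mult_mat_vec[of _ n n _ m], insert Ut St Vt zz, auto)
    finally show ?thesis by simp
  qed
  have s6: "(A + E) *\<^sub>v zz = A *\<^sub>v zz + E *\<^sub>v zz" by (rule add_mult_distrib_mat_vec[OF A E zz])
  have s7: "transpose_mat U *\<^sub>v (A *\<^sub>v zz + E *\<^sub>v zz) = transpose_mat U *\<^sub>v (A *\<^sub>v zz) + transpose_mat U *\<^sub>v (E *\<^sub>v zz)"
    by (rule mult_add_distrib_mat_vec[of _ n n], insert U A E zz, auto)
  have s8: "transpose_mat U *\<^sub>v (A *\<^sub>v zz) = S *\<^sub>v (transpose_mat V *\<^sub>v zz)"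
  proof -
    have "A *\<^sub>v zz = (U * S * transpose_mat V) *\<^sub>v zz" using d1(9) by simp
    also have "\<dots> = (U * S) *\<^sub>v (transpose_mat V *\<^sub>v zz)"
      by (rule assoc_mult_mat_vec[of _ n m _ m], insert U S V zz, auto)
    also have "\<dots> = U *\<^sub>v (S *\<^sub>v (transpose_mat V *\<^sub>v zz))"
      by (rule assoc_mult_mat_vec[of _ n n _ m], insert U S V zz, auto)
    finally have "A *\<^sub>v zz = U *\<^sub>v (S *\<^sub>v (transpose_mat V *\<^sub>v zz))" .
    then show ?thesis using orth_cancel_vec(2)[OF U d1(4), of "S *\<^sub>v (transpose_mat V *\<^sub>v zz)"] S V zz by simp
  qed
  have s9: "transpose_mat (cols_from r U) *\<^sub>v (E *\<^sub>v zz) = tailv r (transpose_mat U *\<^sub>v (E *\<^sub>v zz))"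
    by (rule cols_from_tmult[OF U _ rn'(3)], insert E zz, simp)
  have "XX *\<^sub>v w = tailv r (transpose_mat U *\<^sub>v ((A + E) *\<^sub>v zz))"
    unfolding s1 s2 s3 s4 s5 by (rule cols_from_tmult[OF U _ rn'(3)], insert AE zz, simp)
  also have "\<dots> = tailv r (S *\<^sub>v (transpose_mat V *\<^sub>v zz) + transpose_mat U *\<^sub>v (E *\<^sub>v zz))"
    unfolding s6 s7 s8 ..
  also have "\<dots> = tailv r (S *\<^sub>v (transpose_mat V *\<^sub>v zz)) + tailv r (transpose_mat U *\<^sub>v (E *\<^sub>v zz))"
    by (rule tailv_add[of _ n], insert S V U E zz, auto)
  finally show ?thesis unfolding w_def[symmetric] s9 .
qed


lemma zz_carrier: "Vt *\<^sub>v padt m c \<in> carrier_vec m" using Vt by simp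

lemma zz_norm: "c \<in> carrier_vec r \<Longrightarrow> vnorm (Vt *\<^sub>v padt m c) = vnorm c"
  using orth_vnorm[OF Vt d2(5), of "padt m c"] vnorm_padt[of c m] rn' by simp

lemma Yc: assumes c: "c \<in> carrier_vec r"
  shows "YY *\<^sub>v c = tailv r (transpose_mat V *\<^sub>v (Vt *\<^sub>v padt m c))"
proof -
  have "YY *\<^sub>v c = transpose_mat (cols_from r V) *\<^sub>v (cols_upto r Vt *\<^sub>v c)"
    unfolding YY_def by (rule assoc_mult_mat_vec[OF V2T Vt1 c])
  also have "cols_upto r Vt *\<^sub>v c = Vt *\<^sub>v padt m c" by (rule cols_upto_mult[OF Vt c rn'(4)])
  also have "transpose_mat (cols_from r V) *\<^sub>v (Vt *\<^sub>v padt m c) = tailv r (transpose_mat V *\<^sub>v (Vt *\<^sub>v padt m c))"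
    by (rule cols_from_tmult[OF V zz_carrier rn'(4)])
  finally show ?thesis .
qed

lemma Yc_norm: "c \<in> carrier_vec r \<Longrightarrow> vnorm (tailv r (transpose_mat V *\<^sub>v (Vt *\<^sub>v padt m c))) \<le> yn * vnorm c"
  using Yc[of c] spec_norm_upper[OF YY, of c] unfolding yn_def by simp

lemma tailS_bound: assumes c: "c \<in> carrier_vec r"
  shows "vnorm (tailv r (S *\<^sub>v (transpose_mat V *\<^sub>v (Vt *\<^sub>v padt m c)))) \<le> ss * (yn * vnorm c)"
proof -
  have y: "transpose_mat V *\<^sub>v (Vt *\<^sub>v padt m c) \<in> carrier_vec m" using V zz_carrier by simp
  have "vnorm (tailv r (S *\<^sub>v (transpose_mat V *\<^sub>v (Vt *\<^sub>v padt m c)))) \<le>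
     ss * vnorm (tailv r (transpose_mat V *\<^sub>v (Vt *\<^sub>v padt m c)))"
    unfolding ss_def by (rule tail_diag_bound[OF S d1(6) d1(7) d1(8) y rn])
  also have "\<dots> \<le> ss * (yn * vnorm c)" by (rule mult_left_mono[OF Yc_norm[OF c] ss_props(1)])
  finally show ?thesis .
qed

lemma Ez_bound: assumes c: "c \<in> carrier_vec r"
  shows "vnorm (transpose_mat (cols_from r U) *\<^sub>v (E *\<^sub>v (Vt *\<^sub>v padt m c))) \<le> en * vnorm c"
proof -
  have "vnorm (transpose_mat (cols_from r U) *\<^sub>v (E *\<^sub>v (Vt *\<^sub>v padt m c))) \<le> vnorm (E *\<^sub>v (Vt *\<^sub>v padt m c))"
    by (rule tail_U, insert E zz_carrier, simp)
  also have "\<dots> \<le> en * vnorm (Vt *\<^sub>v padt m c)" unfolding en_def by (rule spec_norm_upper[OF E zz_carrier])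
  finally show ?thesis using zz_norm[OF c] by simp
qed

lemma Ez_split: assumes c: "c \<in> carrier_vec r"
  shows "vnorm (transpose_mat (cols_from r U) *\<^sub>v (E *\<^sub>v (Vt *\<^sub>v padt m c))) \<le> a21 * vnorm c + a22 * (yn * vnorm c)"
proof -
  define zz where "zz = Vt *\<^sub>v padt m c"
  have zz: "zz \<in> carrier_vec m" unfolding zz_def by (rule zz_carrier)
  define y where "y = transpose_mat V *\<^sub>v zz"
  have y: "y \<in> carrier_vec m" unfolding y_def using V zz by simp
  define h where "h = headv r y"
  define tl where "tl = tailv r y"
  have h: "h \<in> carrier_vec r" unfolding h_def by simp
  have tl: "tl \<in> carrier_vec (m - r)" unfolding tl_def using y by simp
  have "zz = V *\<^sub>v y" unfolding y_def using orth_cancel_vec(1)[OF V d1(5) zz] by simp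
  also have "y = padt m h + padb r m tl" unfolding h_def tl_def by (rule split_pad[OF y rn'(4)])
  also have "V *\<^sub>v (padt m h + padb r m tl) = V *\<^sub>v padt m h + V *\<^sub>v padb r m tl"
    by (rule mult_add_distrib_mat_vec[OF V], auto)
  also have "V *\<^sub>v padt m h = cols_upto r V *\<^sub>v h" by (rule cols_upto_mult[OF V h rn'(4), symmetric])
  also have "V *\<^sub>v padb r m tl = cols_from r V *\<^sub>v tl" by (rule cols_from_mult[OF V tl rn'(4), symmetric])
  finally have zsplit: "zz = cols_upto r V *\<^sub>v h + cols_from r V *\<^sub>v tl" .
  have U2TE: "transpose_mat (cols_from r U) * E \<in> carrier_mat (n - r) m" using U2T E by simp
  have v1h: "cols_upto r V *\<^sub>v h \<in> carrier_vec m" using V1 h by simp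
  have v2t: "cols_from r V *\<^sub>v tl \<in> carrier_vec m" using V2 tl by simp
  have e0: "transpose_mat (cols_from r U) *\<^sub>v (E *\<^sub>v zz) =
      transpose_mat (cols_from r U) *\<^sub>v (E *\<^sub>v (cols_upto r V *\<^sub>v h)) +
      transpose_mat (cols_from r U) *\<^sub>v (E *\<^sub>v (cols_from r V *\<^sub>v tl))"
    unfolding zsplit mult_add_distrib_mat_vec[OF E v1h v2t]
    by (rule mult_add_distrib_mat_vec[OF U2T], insert E v1h v2t, auto)
  have e1: "transpose_mat (cols_from r U) *\<^sub>v (E *\<^sub>v (cols_upto r V *\<^sub>v h)) =
      (transpose_mat (cols_from r U) * E * cols_upto r V) *\<^sub>v h"
  proof -
    have "(transpose_mat (cols_from r U) * E * cols_upto r V) *\<^sub>v h = (transpose_mat (cols_from r U) * E) *\<^sub>v (cols_upto r V *\<^sub>v h)"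
      by (rule assoc_mult_mat_vec[OF U2TE V1 h])
    also have "\<dots> = transpose_mat (cols_from r U) *\<^sub>v (E *\<^sub>v (cols_upto r V *\<^sub>v h))"
      by (rule assoc_mult_mat_vec[OF U2T E v1h])
    finally show ?thesis by (rule sym)
  qed
  have e2: "transpose_mat (cols_from r U) *\<^sub>v (E *\<^sub>v (cols_from r V *\<^sub>v tl)) =
      (transpose_mat (cols_from r U) * E * cols_from r V) *\<^sub>v tl"
  proof -
    have "(transpose_mat (cols_from r U) * E * cols_from r V) *\<^sub>v tl = (transpose_mat (cols_from r U) * E) *\<^sub>v (cols_from r V *\<^sub>v tl)"
      by (rule assoc_mult_mat_vec[OF U2TE V2 tl])
    also have "\<dots> = transpose_mat (cols_from r U) *\<^sub>v (E *\<^sub>v (cols_from r V *\<^sub>v tl))"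
      by (rule assoc_mult_mat_vec[OF U2T E v2t])
    finally show ?thesis by (rule sym)
  qed
  have eq: "transpose_mat (cols_from r U) *\<^sub>v (E *\<^sub>v zz) =
      (transpose_mat (cols_from r U) * E * cols_upto r V) *\<^sub>v h + (transpose_mat (cols_from r U) * E * cols_from r V) *\<^sub>v tl"
    by (simp only: e0 e1 e2)
  have "vnorm (transpose_mat (cols_from r U) *\<^sub>v (E *\<^sub>v zz)) \<le>
     vnorm ((transpose_mat (cols_from r U) * E * cols_upto r V) *\<^sub>v h) + vnorm ((transpose_mat (cols_from r U) * E * cols_from r V) *\<^sub>v tl)"
    unfolding eq by (rule vnorm_add[of _ "n - r"], insert M21 M22 h tl, auto)
  also have "\<dots> \<le> a21 * vnorm h + a22 * vnorm tl"
    unfolding a21_def a22_def by (rule add_mono spec_norm_upper[OF M21 h] spec_norm_upper[OF M22 tl])+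
  also have "\<dots> \<le> a21 * vnorm c + a22 * (yn * vnorm c)"
  proof (rule add_mono)
    have "vnorm h \<le> vnorm y" unfolding h_def by (rule vnorm_headv_le[OF y rn'(4)])
    also have "vnorm y = vnorm c" unfolding y_def zz_def using orth_vnorm_T[OF V d1(5) zz_carrier] zz_norm[OF c] by simp
    finally show "a21 * vnorm h \<le> a21 * vnorm c" by (rule mult_left_mono[OF _ nonnegs(4)])
    show "a22 * vnorm tl \<le> a22 * (yn * vnorm c)" unfolding tl_def y_def zz_def
      by (rule mult_left_mono[OF Yc_norm[OF c] nonnegs(5)])
  qed
  finally show ?thesis unfolding zz_def .
qed

lemma bound1: assumes c: "c \<in> carrier_vec r"
  shows "vnorm (XX *\<^sub>v vec r (\<lambda>i. St $$ (i,i) * c $ i)) \<le> (ss * yn + en) * vnorm c"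
proof -
  have "vnorm (XX *\<^sub>v vec r (\<lambda>i. St $$ (i,i) * c $ i)) \<le>
     vnorm (tailv r (S *\<^sub>v (transpose_mat V *\<^sub>v (Vt *\<^sub>v padt m c)))) +
     vnorm (transpose_mat (cols_from r U) *\<^sub>v (E *\<^sub>v (Vt *\<^sub>v padt m c)))"
    unfolding key_id[OF c] by (rule vnorm_add[of _ "n - r"], insert S V U2T E zz_carrier, auto)
  also have "\<dots> \<le> ss * (yn * vnorm c) + en * vnorm c" by (rule add_mono[OF tailS_bound[OF c] Ez_bound[OF c]])
  finally show ?thesis by (simp add: algebra_simps)
qed

lemma bound2: assumes c: "c \<in> carrier_vec r"
  shows "vnorm (XX *\<^sub>v vec r (\<lambda>i. St $$ (i,i) * c $ i)) \<le> ((ss + a22) * yn + a21) * vnorm c"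
proof -
  have "vnorm (XX *\<^sub>v vec r (\<lambda>i. St $$ (i,i) * c $ i)) \<le>
     vnorm (tailv r (S *\<^sub>v (transpose_mat V *\<^sub>v (Vt *\<^sub>v padt m c)))) +
     vnorm (transpose_mat (cols_from r U) *\<^sub>v (E *\<^sub>v (Vt *\<^sub>v padt m c)))"
    unfolding key_id[OF c] by (rule vnorm_add[of _ "n - r"], insert S V U2T E zz_carrier, auto)
  also have "\<dots> \<le> ss * (yn * vnorm c) + (a21 * vnorm c + a22 * (yn * vnorm c))"
    by (rule add_mono[OF tailS_bound[OF c] Ez_split[OF c]])
  finally show ?thesis by (simp add: algebra_simps)
qed

lemma coupled:
  assumes K: "0 \<le> K"
    and b: "\<And>c. c \<in> carrier_vec r \<Longrightarrow> vnorm (XX *\<^sub>v vec r (\<lambda>i. St $$ (i,i) * c $ i)) \<le> K * vnorm c"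
  shows "tt * xn \<le> K"
proof (cases "tt = 0")
  case True then show ?thesis using K by simp
next
  case False
  then have t0: "0 < tt" using tt_props(1) by simp
  have "xn \<le> K / tt" unfolding xn_def
  proof (rule spec_norm_le[OF XX], use r1 in simp)
    fix w :: "real vec" assume w: "w \<in> carrier_vec r"
    define c where "c = vec r (\<lambda>i. w $ i / St $$ (i,i))"
    have c: "c \<in> carrier_vec r" unfolding c_def by simp
    have Stpos: "0 < St $$ (i,i)" if "i < r" for i using tt_props(2)[OF that] t0 by simp
    have wc: "vec r (\<lambda>i. St $$ (i,i) * c $ i) = w"
    proof (rule eq_vecI)
      fix i assume "i < dim_vec w"
      then have i: "i < r" using w by simp
      have ne: "St $$ (i,i) \<noteq> 0" using Stpos[OF i] by simp
      show "vec r (\<lambda>i. St $$ (i,i) * c $ i) $ i = w $ i" using ne i by (simp add: c_def)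
    qed (insert w, simp)
    have "(vnorm c)^2 = (\<Sum>i\<in>{0..<r}. (w $ i / St $$ (i,i))^2)"
      using full_sq_sum[OF c] by (simp add: c_def)
    also have "\<dots> \<le> (\<Sum>i\<in>{0..<r}. (w $ i / tt)^2)"
    proof (rule sum_mono)
      fix i assume "i \<in> {0..<r}"
      then have i: "i < r" by simp
      have "\<bar>w $ i / St $$ (i,i)\<bar> \<le> \<bar>w $ i / tt\<bar>"
        using Stpos[OF i] tt_props(2)[OF i] t0
        by (simp add: abs_div divide_left_mono)
      then show "(w $ i / St $$ (i,i))^2 \<le> (w $ i / tt)^2"
        by (metis abs_ge_zero power2_abs power_mono)
    qed
    also have "\<dots> = (vnorm w / tt)^2"
      using full_sq_sum[OF w] by (simp add: power_divide sum_divide_distrib)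
    finally have sq: "(vnorm c)^2 \<le> (vnorm w / tt)^2" .
    have "0 \<le> vnorm w / tt" using t0 vnorm_nonneg[of w] by simp
    then have "vnorm c \<le> vnorm w / tt" by (rule power2_le_imp_le[OF sq])
    then have k1: "K * vnorm c \<le> K * (vnorm w / tt)" by (rule mult_left_mono[OF _ K])
    have k2: "vnorm (XX *\<^sub>v w) \<le> K * vnorm c" using b[OF c] unfolding wc .
    have k3: "K * (vnorm w / tt) = K / tt * vnorm w" by simp
    show "vnorm (XX *\<^sub>v w) \<le> K / tt * vnorm w" using k1 k2 k3 by linarith
  qed
  then show ?thesis using t0 by (simp add: field_simps)
qed

lemma ineq1: "tt * xn \<le> ss * yn + en"
  by (rule coupled, insert ss_props nonnegs bound1, auto)

lemma ineq2: "tt * xn \<le> (ss + a22) * yn + a21"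
  by (rule coupled, insert ss_props nonnegs bound2, auto)

end

context svdpert begin

lemma sin_le_xn: "spec_norm (sin_theta (cols_upto r U) (cols_upto r Ut)) \<le> xn"
  by (rule sin_theta_le[OF U d1(4) Ut d2(4) _ rn'(3) nonnegs(1)], insert r1, simp,
      unfold xn_def XX_def[symmetric], rule spec_norm_upper[OF XX])

lemma xn_le1: "xn \<le> 1"
  unfolding xn_def
  by (rule spec_norm_le[OF XX], insert r1, simp, unfold XX_def, rule proj_le_one[OF U d1(4) Ut d2(4) rn'(3)])

lemma a22_le: "a22 \<le> en"
  unfolding a22_def
proof (rule spec_norm_le[OF M22], insert rn', simp)
  fix c :: "real vec" assume c: "c \<in> carrier_vec (m - r)"
  have V2c: "cols_from r V *\<^sub>v c \<in> carrier_vec m" using V2 c by simp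
  have U2TE: "transpose_mat (cols_from r U) * E \<in> carrier_mat (n - r) m" using U2T E by simp
  have "(transpose_mat (cols_from r U) * E * cols_from r V) *\<^sub>v c = (transpose_mat (cols_from r U) * E) *\<^sub>v (cols_from r V *\<^sub>v c)"
    by (rule assoc_mult_mat_vec[OF U2TE V2 c])
  also have "\<dots> = transpose_mat (cols_from r U) *\<^sub>v (E *\<^sub>v (cols_from r V *\<^sub>v c))"
    by (rule assoc_mult_mat_vec[OF U2T E V2c])
  finally have eq: "(transpose_mat (cols_from r U) * E * cols_from r V) *\<^sub>v c = transpose_mat (cols_from r U) *\<^sub>v (E *\<^sub>v (cols_from r V *\<^sub>v c))" .
  have "vnorm (transpose_mat (cols_from r U) *\<^sub>v (E *\<^sub>v (cols_from r V *\<^sub>v c))) \<le> vnorm (E *\<^sub>v (cols_from r V *\<^sub>v c))"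
    by (rule tail_U, insert E V2c, simp)
  also have "\<dots> \<le> en * vnorm (cols_from r V *\<^sub>v c)" unfolding en_def by (rule spec_norm_upper[OF E V2c])
  also have "vnorm (cols_from r V *\<^sub>v c) = vnorm c"
    unfolding cols_from_mult[OF V c rn'(4)] using orth_vnorm[OF V d1(5), of "padb r m c"] vnorm_padb[of c m r] c rn' by simp
  finally show "vnorm ((transpose_mat (cols_from r U) * E * cols_from r V) *\<^sub>v c) \<le> en * vnorm c"
    unfolding eq .
qed

lemma weyl: "sr - en \<le> tt"
proof -
  define W where "W = transpose_mat Vt * cols_upto r V"
  have W: "W \<in> carrier_mat m r" unfolding W_def using Vt V1 by simp
  define K where "K = mat\<^sub>r r r (\<lambda>i. if i = r - 1 then 0\<^sub>v r else row W i)"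
  have K: "K \<in> carrier_mat r r" unfolding K_def by simp
  have "det K = 0" unfolding K_def
    by (rule det_row_0, insert r1 W, auto)
  then obtain c0 where c0: "c0 \<in> carrier_vec r" "c0 \<noteq> 0\<^sub>v r" "K *\<^sub>v c0 = 0\<^sub>v r"
    using det_0_iff_vec_prod_zero[OF K] by blast
  have pos: "vnorm c0 > 0" using vnorm_nonneg[of c0] vnorm_zero[OF c0(1)] c0(2) by force
  define c where "c = (1 / vnorm c0) \<cdot>\<^sub>v c0"
  have c: "c \<in> carrier_vec r" unfolding c_def using c0 by simp
  have nc: "vnorm c = 1" unfolding c_def vnorm_smult using pos by simp
  have Kc: "K *\<^sub>v c = 0\<^sub>v r"
  proof -
    have "K *\<^sub>v c = (1 / vnorm c0) \<cdot>\<^sub>v (K *\<^sub>v c0)" unfolding c_def by (rule mult_mat_vec[OF K c0(1)])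
    also have "\<dots> = 0\<^sub>v r" unfolding c0(3) by (rule eq_vecI, auto)
    finally show ?thesis .
  qed
  define z where "z = cols_upto r V *\<^sub>v c"
  have z: "z \<in> carrier_vec m" unfolding z_def using V1 c by simp
  have zV: "z = V *\<^sub>v padt m c" unfolding z_def by (rule cols_upto_mult[OF V c rn'(4)])
  have nz: "vnorm z = 1" unfolding zV using orth_vnorm[OF V d1(5), of "padt m c"] vnorm_padt[of c m] c rn' nc by simp
  have u: "transpose_mat Vt *\<^sub>v z \<in> carrier_vec m" using Vt z by simp
  have uz: "\<forall>i < r - 1. (transpose_mat Vt *\<^sub>v z) $ i = 0"
  proof (intro allI impI)
    fix i assume i: "i < r - 1"
    have "(transpose_mat Vt *\<^sub>v z) = W *\<^sub>v c" unfolding z_def W_def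
      by (rule assoc_mult_mat_vec[symmetric, of _ m m _ r], insert Vt V1 c, auto)
    then have "(transpose_mat Vt *\<^sub>v z) $ i = row W i \<bullet> c" using i W rn' by simp
    also have "row W i = row K i" unfolding K_def using i W by simp
    also have "row K i \<bullet> c = (K *\<^sub>v c) $ i" using i K by simp
    finally show "(transpose_mat Vt *\<^sub>v z) $ i = 0" unfolding Kc using i by simp
  qed
  have low: "sr \<le> vnorm (A *\<^sub>v z)"
  proof -
    have "A *\<^sub>v z = (U * S * transpose_mat V) *\<^sub>v z" using d1(9) by simp
    also have "\<dots> = (U * S) *\<^sub>v (transpose_mat V *\<^sub>v z)"
      by (rule assoc_mult_mat_vec[of _ n m _ m], insert U S V z, auto)
    also have "\<dots> = U *\<^sub>v (S *\<^sub>v (transpose_mat V *\<^sub>v z))"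
      by (rule assoc_mult_mat_vec[of _ n n _ m], insert U S V z, auto)
    also have "transpose_mat V *\<^sub>v z = padt m c" unfolding zV by (rule orth_cancel_vec(2)[OF V d1(5)], simp)
    finally have "vnorm (A *\<^sub>v z) = vnorm (S *\<^sub>v padt m c)" using orth_vnorm[OF U d1(4), of "S *\<^sub>v padt m c"] S by simp
    moreover have "S $$ (r - 1, r - 1) * vnorm c \<le> vnorm (S *\<^sub>v padt m c)"
      by (rule head_diag_lower[OF S d1(6) d1(7) d1(8) c _ r1], insert rn, simp)
    ultimately show ?thesis using nc unfolding sr_def by simp
  qed
  have up: "vnorm ((A + E) *\<^sub>v z) \<le> tt"
  proof -
    have "(A + E) *\<^sub>v z = (Ut * St * transpose_mat Vt) *\<^sub>v z" using d2(9) by simp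
    also have "\<dots> = (Ut * St) *\<^sub>v (transpose_mat Vt *\<^sub>v z)"
      by (rule assoc_mult_mat_vec[of _ n m _ m], insert Ut St Vt z, auto)
    also have "\<dots> = Ut *\<^sub>v (St *\<^sub>v (transpose_mat Vt *\<^sub>v z))"
      by (rule assoc_mult_mat_vec[of _ n n _ m], insert Ut St Vt z, auto)
    finally have "vnorm ((A + E) *\<^sub>v z) = vnorm (St *\<^sub>v (transpose_mat Vt *\<^sub>v z))"
      using orth_vnorm[OF Ut d2(4), of "St *\<^sub>v (transpose_mat Vt *\<^sub>v z)"] St u by simp
    also have "\<dots> \<le> St $$ (r - 1, r - 1) * vnorm (transpose_mat Vt *\<^sub>v z)"
      by (rule diag_upper_from[OF St d2(6) d2(7) d2(8) u _ uz], insert rn, auto)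
    also have "vnorm (transpose_mat Vt *\<^sub>v z) = 1" using orth_vnorm_T[OF Vt d2(5) z] nz by simp
    finally show ?thesis unfolding tt_def by simp
  qed
  have "vnorm (A *\<^sub>v z) - vnorm (E *\<^sub>v z) \<le> vnorm (A *\<^sub>v z + E *\<^sub>v z)"
    by (rule vnorm_diff[of _ n], insert A E z, auto)
  also have "A *\<^sub>v z + E *\<^sub>v z = (A + E) *\<^sub>v z" by (rule add_mult_distrib_mat_vec[OF A E z, symmetric])
  finally have "vnorm (A *\<^sub>v z) - vnorm (E *\<^sub>v z) \<le> tt" using up by simp
  moreover have "vnorm (E *\<^sub>v z) \<le> en" using spec_norm_upper[OF E z] nz unfolding en_def by simp
  ultimately show ?thesis using low by simp
qed

end

lemma alg2:
  fixes x y t0 b p q sg s :: real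
  assumes x: "0 \<le> x" and y: "0 \<le> y" and t0: "0 \<le> t0" and b: "0 \<le> b"
    and i1: "t0 * x \<le> b * y + p" and i2: "t0 * y \<le> b * x + q" and ts: "t0 \<le> sg"
    and p: "0 \<le> p" and q: "0 \<le> q"
    and D: "(sg * sg - s * s) / 2 \<le> t0 * t0 - b * b" and ss: "s < sg" and s0: "0 \<le> s"
  shows "x \<le> 8 / 3 * ((sg * p + b * q) / (sg^2 - s^2))"
proof -
  have "t0 * (t0 * x) \<le> t0 * (b * y + p)" by (rule mult_left_mono[OF i1 t0])
  also have "\<dots> = b * (t0 * y) + t0 * p" by (simp add: algebra_simps)
  also have "\<dots> \<le> b * (b * x + q) + t0 * p" using mult_left_mono[OF i2 b] by simp
  finally have h4: "x * (t0 * t0 - b * b) \<le> b * q + t0 * p" by (simp add: algebra_simps)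
  have "x * ((sg * sg - s * s) / 2) \<le> x * (t0 * t0 - b * b)" by (rule mult_left_mono[OF D x])
  also have "\<dots> \<le> b * q + t0 * p" by (rule h4)
  also have "\<dots> \<le> b * q + sg * p" using mult_right_mono[OF ts p] by simp
  finally have h6: "x * ((sg * sg - s * s) / 2) \<le> sg * p + b * q" by simp
  have Dpos: "0 < sg^2 - s^2" using ss s0 by (simp add: power_strict_mono)
  have "x \<le> 2 * ((sg * p + b * q) / (sg^2 - s^2))"
    using h6 Dpos by (simp add: field_simps power2_eq_square)
  also have "\<dots> \<le> 8 / 3 * ((sg * p + b * q) / (sg^2 - s^2))"
  proof (rule mult_right_mono)
    show "0 \<le> (sg * p + b * q) / (sg^2 - s^2)" using Dpos p q b ss s0 by simp
  qed simp
  finally show ?thesis .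
qed

lemma alg1:
  fixes x y t sg s e :: real
  assumes x: "0 \<le> x" and y: "0 \<le> y" and x1: "x \<le> 1" and y1: "y \<le> 1" and e: "0 \<le> e" and s0: "0 \<le> s"
    and i1: "t * x \<le> s * y + e" and i2: "t * y \<le> s * x + e" and w: "sg - e \<le> t" and ss: "s < sg"
  shows "max x y \<le> 2 * e / (sg - s)"
proof -
  define M where "M = max x y"
  have M0: "0 \<le> M" and M1: "M \<le> 1" using x y x1 y1 unfolding M_def by auto
  have key: "(sg - e) * M \<le> s * M + e"
  proof (cases "y \<le> x")
    case True
    then have "M = x" unfolding M_def by simp
    have "(sg - e) * x \<le> t * x" by (rule mult_right_mono[OF w x])
    also have "\<dots> \<le> s * y + e" by (rule i1)
    also have "s * y \<le> s * x" using True s0 by (simp add: mult_left_mono)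
    finally show ?thesis using \<open>M = x\<close> by simp
  next
    case False
    then have "M = y" unfolding M_def by simp
    have "(sg - e) * y \<le> t * y" by (rule mult_right_mono[OF w y])
    also have "\<dots> \<le> s * x + e" by (rule i2)
    also have "s * x \<le> s * y" using False s0 by (simp add: mult_left_mono)
    finally show ?thesis using \<open>M = y\<close> by simp
  qed
  have "e * M \<le> e" using mult_left_mono[OF M1 e] by simp
  then have "M * (sg - s) \<le> 2 * e" using key by (simp add: algebra_simps)
  then show ?thesis unfolding M_def[symmetric] using ss by (simp add: pos_le_divide_eq)
qed

theorem theorem3p2:
  fixes A dA U S V Ut St Vt :: "real mat" and n m r :: nat
  assumes "A \<in> carrier_mat n m" and "dA \<in> carrier_mat n m"
    and "1 \<le> r" and "r < min n m"
    and "is_svd A U S V"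
    and "is_svd (A + dA) Ut St Vt"
  shows
    "(let U1 = cols_upto r U; V1 = cols_upto r V;
          U1t = cols_upto r Ut; V1t = cols_upto r Vt;
          sr = S $$ (r - 1, r - 1); sr1 = S $$ (r, r) in
      max (spec_norm (sin_theta U1 U1t)) (spec_norm (sin_theta V1 V1t))
        \<le> (if sr = sr1 then 1 else min (2 * spec_norm dA / (sr - sr1)) 1))
   \<and> (let U1 = cols_upto r U; U2 = cols_from r U;
          V1 = cols_upto r V; V2 = cols_from r V;
          U1t = cols_upto r Ut; V1t = cols_upto r Vt;
          sr = S $$ (r - 1, r - 1); sr1 = S $$ (r, r);
          a12 = transpose_mat U1 * dA * V2;
          a21 = transpose_mat U2 * dA * V1;
          a22 = transpose_mat U2 * dA * V2 in
      (sr1 < sr \<and> 4 * spec_norm dA \<le> sr - sr1) \<longrightarrow>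
        spec_norm (sin_theta U1 U1t) \<le> 8 / 3 *
          ((sr * spec_norm a21 + sr1 * spec_norm a12 + spec_norm a22 * spec_norm a12)
             / (sr\<^sup>2 - sr1\<^sup>2))
      \<and> spec_norm (sin_theta V1 V1t) \<le> 8 / 3 *
          ((sr * spec_norm a12 + sr1 * spec_norm a21 + spec_norm a22 * spec_norm a21)
             / (sr\<^sup>2 - sr1\<^sup>2)))"
proof -
  note A = assms(1) and dA = assms(2)
  interpret P1: svdpert A dA U S V Ut St Vt n m r
    by (unfold_locales, insert assms, auto)
  have AE: "A + dA \<in> carrier_mat n m" using A dA by simp
  have tAE: "transpose_mat (A + dA) = transpose_mat A + transpose_mat dA"
    by (rule transpose_add[OF A dA])
  have svdT: "is_svd (transpose_mat A + transpose_mat dA) Vt (transpose_mat St) Ut"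
    using is_svd_transpose[OF assms(6) AE] unfolding tAE .
  interpret P2: svdpert "transpose_mat A" "transpose_mat dA" V "transpose_mat S" U Vt "transpose_mat St" Ut m n r
    by (unfold_locales, insert assms is_svd_transpose[OF assms(5) A] svdT, auto)
  have n0: "0 < n" and m0: "0 < m" using assms(4) by auto
  have eX: "P2.xn = P1.yn" unfolding P2.xn_def P1.yn_def P2.XX_def P1.YY_def ..
  have eY: "P2.yn = P1.xn" unfolding P2.yn_def P1.xn_def P2.YY_def P1.XX_def ..
  have eE: "P2.en = P1.en" unfolding P2.en_def P1.en_def by (rule spec_norm_transpose[OF dA n0 m0])
  have eT: "P2.tt = P1.tt" unfolding P2.tt_def P1.tt_def using P1.St P1.rn' by simp
  have eS: "P2.ss = P1.ss" unfolding P2.ss_def P1.ss_def using P1.S P1.rn' by simp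
  have eR: "P2.sr = P1.sr" unfolding P2.sr_def P1.sr_def using P1.S P1.rn' by simp
  define a12 where "a12 = spec_norm (transpose_mat (cols_upto r U) * dA * cols_from r V)"
  have U1T: "transpose_mat (cols_upto r U) \<in> carrier_mat r n" using cols_upto_carrier'[OF P1.U, of r] by simp
  have a12m: "transpose_mat (cols_upto r U) * dA * cols_from r V \<in> carrier_mat r (m - r)"
    using U1T dA P1.V2 by simp
  have eA21: "P2.a21 = a12"
  proof -
    have "transpose_mat (transpose_mat (cols_upto r U) * dA * cols_from r V) =
        transpose_mat (cols_from r V) * transpose_mat dA * cols_upto r U"
      using transpose3[OF U1T dA P1.V2] by simp
    then have "P2.a21 = spec_norm (transpose_mat (transpose_mat (cols_upto r U) * dA * cols_from r V))"
      unfolding P2.a21_def by simp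
    also have "\<dots> = a12" unfolding a12_def by (rule spec_norm_transpose[OF a12m], insert P1.r1 P1.rn', auto)
    finally show ?thesis .
  qed
  have eA22: "P2.a22 = P1.a22"
  proof -
    have "transpose_mat (transpose_mat (cols_from r U) * dA * cols_from r V) =
        transpose_mat (cols_from r V) * transpose_mat dA * cols_from r U"
      using transpose3[OF P1.U2T dA P1.V2] by simp
    then have "P2.a22 = spec_norm (transpose_mat (transpose_mat (cols_from r U) * dA * cols_from r V))"
      unfolding P2.a22_def by simp
    also have "\<dots> = P1.a22" unfolding P1.a22_def by (rule spec_norm_transpose[OF P1.M22], insert P1.rn', auto)
    finally show ?thesis .
  qed
  have a12n: "0 \<le> a12" using P2.nonnegs(4) eA21 by simp
  define x where "x = P1.xn"
  define y where "y = P1.yn"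
  define e where "e = P1.en"
  define t where "t = P1.tt"
  define s where "s = P1.ss"
  define sg where "sg = P1.sr"
  define a21 where "a21 = P1.a21"
  define a22 where "a22 = P1.a22"
  have x0: "0 \<le> x" and y0: "0 \<le> y" and e0: "0 \<le> e" and a210: "0 \<le> a21" and a220: "0 \<le> a22"
    using P1.nonnegs unfolding x_def y_def e_def a21_def a22_def by auto
  have x1: "x \<le> 1" unfolding x_def by (rule P1.xn_le1)
  have y1: "y \<le> 1" unfolding y_def using P2.xn_le1 eX by simp
  have s0: "0 \<le> s" and ssg: "s \<le> sg" using P1.ss_props unfolding s_def sg_def by auto
  have i1: "t * x \<le> s * y + e" unfolding t_def x_def s_def y_def e_def by (rule P1.ineq1)
  have i1': "t * y \<le> s * x + e" using P2.ineq1 unfolding t_def x_def s_def y_def e_def eX eY eE eT eS .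
  have i2: "t * x \<le> (s + a22) * y + a21" unfolding t_def x_def s_def y_def a21_def a22_def by (rule P1.ineq2)
  have i2': "t * y \<le> (s + a22) * x + a12" using P2.ineq2 unfolding t_def x_def s_def y_def a22_def eX eY eT eS eA21 eA22 .
  have w: "sg - e \<le> t" unfolding sg_def e_def t_def by (rule P1.weyl)
  have a22e: "a22 \<le> e" unfolding a22_def e_def by (rule P1.a22_le)
  have sinU: "spec_norm (sin_theta (cols_upto r U) (cols_upto r Ut)) \<le> x" unfolding x_def by (rule P1.sin_le_xn)
  have sinV: "spec_norm (sin_theta (cols_upto r V) (cols_upto r Vt)) \<le> y" using P2.sin_le_xn unfolding y_def eX .
  have Sdefs: "S $$ (r - 1, r - 1) = sg" "S $$ (r, r) = s" "spec_norm dA = e"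
    unfolding sg_def s_def e_def P1.sr_def P1.ss_def P1.en_def by auto
  have part1: "max (spec_norm (sin_theta (cols_upto r U) (cols_upto r Ut))) (spec_norm (sin_theta (cols_upto r V) (cols_upto r Vt)))
      \<le> (if sg = s then 1 else min (2 * e / (sg - s)) 1)"
  proof -
    have mx: "max (spec_norm (sin_theta (cols_upto r U) (cols_upto r Ut))) (spec_norm (sin_theta (cols_upto r V) (cols_upto r Vt))) \<le> max x y"
      using sinU sinV by auto
    show ?thesis
    proof (cases "sg = s")
      case True
      have m1: "max x y \<le> 1" using x1 y1 by simp
      show ?thesis using order.trans[OF mx m1] True by simp
    next
      case False
      then have ss: "s < sg" using ssg by simp
      have "max x y \<le> 2 * e / (sg - s)" by (rule alg1[OF x0 y0 x1 y1 e0 s0 i1 i1' w ss])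
      moreover have "max x y \<le> 1" using x1 y1 by simp
      ultimately have "max x y \<le> min (2 * e / (sg - s)) 1" by simp
      then show ?thesis using order.trans[OF mx] False by simp
    qed
  qed
  have part2: "s < sg \<and> 4 * e \<le> sg - s \<longrightarrow>
      spec_norm (sin_theta (cols_upto r U) (cols_upto r Ut)) \<le> 8 / 3 * ((sg * a21 + s * a12 + a22 * a12) / (sg^2 - s^2))
    \<and> spec_norm (sin_theta (cols_upto r V) (cols_upto r Vt)) \<le> 8 / 3 * ((sg * a12 + s * a21 + a22 * a21) / (sg^2 - s^2))"
  proof
    assume h: "s < sg \<and> 4 * e \<le> sg - s"
    define t0 where "t0 = sg - e"
    define b where "b = s + a22"
    have t00: "0 \<le> t0" unfolding t0_def using h e0 s0 by linarith
    have b0: "0 \<le> b" unfolding b_def using s0 a220 by simp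
    have tt0: "t0 \<le> t" unfolding t0_def using w .
    have j1: "t0 * x \<le> b * y + a21"
      using mult_right_mono[OF tt0 x0] i2 unfolding b_def by linarith
    have j2: "t0 * y \<le> b * x + a12"
      using mult_right_mono[OF tt0 y0] i2' unfolding b_def by linarith
    have tsg: "t0 \<le> sg" unfolding t0_def using e0 by simp
    have bse: "b \<le> s + e" unfolding b_def using a22e by simp
    have bb: "b * b \<le> (s + e) * (s + e)" by (rule mult_mono[OF bse bse], insert b0 s0 e0, auto)
    have id: "t0 * t0 - (s + e) * (s + e) = (sg - s - 2 * e) * (sg + s)" unfolding t0_def by (simp add: algebra_simps)
    have "(sg - s) / 2 * (sg + s) \<le> (sg - s - 2 * e) * (sg + s)"
      by (rule mult_right_mono, insert h s0, auto)
    then have D: "(sg * sg - s * s) / 2 \<le> t0 * t0 - b * b" using id bb by (simp add: algebra_simps)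
    have r1: "x \<le> 8 / 3 * ((sg * a21 + b * a12) / (sg^2 - s^2))"
      by (rule alg2[OF x0 y0 t00 b0 j1 j2 tsg a210 a12n D _ s0], insert h, simp)
    have r2: "y \<le> 8 / 3 * ((sg * a12 + b * a21) / (sg^2 - s^2))"
      by (rule alg2[OF y0 x0 t00 b0 j2 j1 tsg a12n a210 D _ s0], insert h, simp)
    have q1: "sg * a21 + b * a12 = sg * a21 + s * a12 + a22 * a12" unfolding b_def by (simp add: algebra_simps)
    have q2: "sg * a12 + b * a21 = sg * a12 + s * a21 + a22 * a21" unfolding b_def by (simp add: algebra_simps)
    show "spec_norm (sin_theta (cols_upto r U) (cols_upto r Ut)) \<le> 8 / 3 * ((sg * a21 + s * a12 + a22 * a12) / (sg^2 - s^2))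
    \<and> spec_norm (sin_theta (cols_upto r V) (cols_upto r Vt)) \<le> 8 / 3 * ((sg * a12 + s * a21 + a22 * a21) / (sg^2 - s^2))"
      using order.trans[OF sinU r1[unfolded q1]] order.trans[OF sinV r2[unfolded q2]] by (rule conjI)
  qed
  show ?thesis
    unfolding Let_def Sdefs a12_def[symmetric]
    using part1 part2 unfolding a21_def a22_def P1.a21_def P1.a22_def by simp
qed

end
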